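(* Each non-empty stunted sawtooth bone $B^{\rm saw}_\pm(o)$ of period $p\ge2$ is a simple arc with both endpoints on a common edge of the triangle $\overline T$, and it is made up of three line segments which are alternately horizontal and vertical (in the coordinates $(w_1,w_2)$). Any pair $B^{\rm saw}_-(o)$ and $B^{\rm saw}_+(o')$ of such bones intersect transversally in either $0$, $2$, or $4$ points. Dual bones $B^{\rm saw}_-(o)$ and $B^{\rm saw}_+(o)$ (same order type) always intersect in exactly two points.
   Context: $\overline T=\{(w_1,w_2)\in\mathbb R^2: 1\ge w_1\ge w_2\ge0\}$, whose edges are $\{w_1=1\}$, $\{w_2=0\}$, $\{w_1=w_2\}$. For $\mathbf w\in\overline T$, the stunted sawtooth map $S_{\mathbf w}:[0,1]\to[0,1]$ is $S_{\mathbf w}(x)=\min(3x,w_1)$ on $[0,1/3]$, $\min(w_1,\max(w_2,2-3x))$ on $[1/3,2/3]$, $\max(3x-2,w_2)$ on $[2/3,1]$. A periodic orbit $x_1<\dots<x_p$ of $g$ has order type $o$ (cyclic permutation of $\{1,\dots,p\}$) if $g(x_i)=x_{o(i)}$. $B^{\rm saw}_-(o)$ (resp. $B^{\rm saw}_+(o)$) is the set of $\mathbf w\in\overline T$ such that $1/3$ (resp. $2/3$) is periodic under $S_{\mathbf w}$ with orbit of order type $o$. *)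

theory Defs
  imports "HOL-Analysis.Analysis"
begin

text \<open>Closed triangle T-bar in coordinates (w1,w2) = (fst w, snd w).\<close>
definition Tbar :: "(real \<times> real) set" where
  "Tbar = {w. 1 \<ge> fst w \<and> fst w \<ge> snd w \<and> snd w \<ge> 0}"

definition edges_T :: "(real \<times> real) set set" where
  "edges_T = {{w \<in> Tbar. fst w = 1}, {w \<in> Tbar. snd w = 0}, {w \<in> Tbar. fst w = snd w}}"

definition saw :: "real \<times> real \<Rightarrow> real \<Rightarrow> real" where
  "saw w x =
     (if x \<le> 1/3 then min (3*x) (fst w)
      else if x \<le> 2/3 then min (fst w) (max (snd w) (2 - 3*x))
      else max (3*x - 2) (snd w))"

definition cyclic_perm :: "nat \<Rightarrow> (nat \<Rightarrow> nat) \<Rightarrow> bool" where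
  "cyclic_perm p \<sigma> \<longleftrightarrow> \<sigma> permutes {1..p} \<and> (\<forall>i\<in>{1..p}. \<exists>k. (\<sigma> ^^ k) 1 = i)"

text \<open>x is periodic under g with exact period p, and its orbit x_1 < ... < x_p
  satisfies g(x_i) = x_{o(i)}.\<close>
definition periodic_order_type ::
    "(real \<Rightarrow> real) \<Rightarrow> real \<Rightarrow> nat \<Rightarrow> (nat \<Rightarrow> nat) \<Rightarrow> bool" where
  "periodic_order_type g x p \<sigma> \<longleftrightarrow>
     p \<ge> 1 \<and> (g ^^ p) x = x \<and> (\<forall>k\<in>{1..<p}. (g ^^ k) x \<noteq> x) \<and>
     (let xs = sorted_list_of_set ((\<lambda>k. (g ^^ k) x) ` {..<p})
      in \<forall>i\<in>{1..p}. g (xs ! (i - 1)) = xs ! (\<sigma> i - 1))"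

definition bone_minus :: "nat \<Rightarrow> (nat \<Rightarrow> nat) \<Rightarrow> (real \<times> real) set" where
  "bone_minus p \<sigma> = {w \<in> Tbar. periodic_order_type (saw w) (1/3) p \<sigma>}"

definition bone_plus :: "nat \<Rightarrow> (nat \<Rightarrow> nat) \<Rightarrow> (real \<times> real) set" where
  "bone_plus p \<sigma> = {w \<in> Tbar. periodic_order_type (saw w) (2/3) p \<sigma>}"

definition staircase_arc :: "(real \<times> real) set \<Rightarrow> bool" where
  "staircase_arc B \<longleftrightarrow>
     (\<exists>a b c d. a \<noteq> b \<and> b \<noteq> c \<and> c \<noteq> d \<and>
        ((snd a = snd b \<and> fst b = fst c \<and> snd c = snd d) \<or>
         (fst a = fst b \<and> snd b = snd c \<and> fst c = fst d)) \<and>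
        arc (linepath a b +++ linepath b c +++ linepath c d) \<and>
        B = path_image (linepath a b +++ linepath b c +++ linepath c d) \<and>
        (\<exists>E\<in>edges_T. a \<in> E \<and> d \<in> E))"

definition crosses_transversally_at ::
    "(real \<times> real) set \<Rightarrow> (real \<times> real) set \<Rightarrow> real \<times> real \<Rightarrow> bool" where
  "crosses_transversally_at A B x \<longleftrightarrow>
     (\<exists>e>0.
        (A \<inter> ball x e = {y \<in> ball x e \<inter> Tbar. snd y = snd x} \<and>
         B \<inter> ball x e = {y \<in> ball x e \<inter> Tbar. fst y = fst x}) \<or>
        (A \<inter> ball x e = {y \<in> ball x e \<inter> Tbar. fst y = fst x} \<and>
         B \<inter> ball x e = {y \<in> ball x e \<inter> Tbar. snd y = snd x}))"

end

theory Submission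
  imports Defs
begin


definition rk :: "(nat \<Rightarrow> real) \<Rightarrow> nat \<Rightarrow> nat \<Rightarrow> nat" where
  "rk y p t = card {s. s < p \<and> y s < y t}"

lemma orbit_mod:
  assumes "(g ^^ p) x = x"
  shows "(g ^^ n) x = (g ^^ (n mod p)) x"
proof -
  have "\<And>k. (g ^^ (k * p)) x = x"
  proof -
    fix k show "(g ^^ (k * p)) x = x"
      by (induction k) (simp_all add: funpow_add assms)
  qed
  moreover have "n = n mod p + (n div p) * p" by simp
  ultimately show ?thesis by (metis funpow_add comp_apply)
qed

lemma orbit_inj:
  assumes "(g ^^ p) x = x" "\<forall>k\<in>{1..<p}. (g ^^ k) x \<noteq> x"
  shows "inj_on (\<lambda>k. (g ^^ k) x) {..<p}"
proof (rule inj_onI)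
  have main: "s = t" if "s < p" "t < p" "s \<le> t" "(g ^^ s) x = (g ^^ t) x" for s t
  proof (rule ccontr)
    assume "s \<noteq> t"
    hence st: "s < t" using that by simp
    have "(g ^^ (p - t + s)) x = (g ^^ (p - t)) ((g ^^ s) x)" by (simp add: funpow_add)
    also have "\<dots> = (g ^^ (p - t)) ((g ^^ t) x)" using that by simp
    also have "\<dots> = (g ^^ p) x" using that by (metis funpow_add comp_apply le_add_diff_inverse2 less_imp_le)
    finally have "(g ^^ (p - t + s)) x = x" using assms by simp
    moreover have "p - t + s \<in> {1..<p}" using st that by auto
    ultimately show False using assms by blast
  qed
  fix s t assume "s \<in> {..<p}" "t \<in> {..<p}" "(g ^^ s) x = (g ^^ t) x"
  thus "s = t" using main[of s t] main[of t s] by (cases "s \<le> t") auto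
qed

lemma sorted_nth_card:
  fixes A :: "real set"
  assumes "finite A" "a \<in> A"
  shows "sorted_list_of_set A ! card {b\<in>A. b < a} = a"
proof -
  define xs where "xs = sorted_list_of_set A"
  have sx: "sorted_wrt (<) xs" "set xs = A" "distinct xs"
    using assms by (auto simp: xs_def)
  obtain i where i: "i < length xs" "xs ! i = a" using sx(2) assms by (metis in_set_conv_nth)
  have "{b\<in>A. b < a} = (\<lambda>k. xs ! k) ` {..<i}"
  proof
    show "{b \<in> A. b < a} \<subseteq> (!) xs ` {..<i}"
    proof
      fix b assume b: "b \<in> {b \<in> A. b < a}"
      then obtain k where k: "k < length xs" "xs ! k = b" using sx(2) by (metis (no_types, lifting) in_set_conv_nth mem_Collect_eq)
      have "k < i"
      proof (rule ccontr)
        assume "\<not> k < i"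
        hence "i \<le> k" by simp
        hence "xs ! i \<le> xs ! k"
          using sx(1) k i by (metis order.order_iff_strict sorted_wrt_nth_less)
        thus False using b i k by simp
      qed
      thus "b \<in> (!) xs ` {..<i}" using k by auto
    qed
    show "(!) xs ` {..<i} \<subseteq> {b \<in> A. b < a}"
      using sx i by (auto intro: sorted_wrt_nth_less)
  qed
  moreover have "inj_on (\<lambda>k. xs ! k) {..<i}"
    using sx(3) i by (simp add: inj_on_def nth_eq_iff_index_eq)
  ultimately have "card {b\<in>A. b < a} = i" by (simp add: card_image)
  thus ?thesis using i xs_def by simp
qed



lemma rk_lt: assumes "t < p" shows "rk y p t < p"
proof -
  have "{s. s < p \<and> y s < y t} \<subseteq> {..<p} - {t}" by auto
  hence "rk y p t \<le> card ({..<p} - {t})" unfolding rk_def by (intro card_mono) auto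
  thus ?thesis using assms by simp
qed

lemma rk_mono_iff:
  assumes "inj_on y {..<p}" "s < p" "t < p"
  shows "rk y p s < rk y p t \<longleftrightarrow> y s < y t"
proof
  assume "y s < y t"
  hence "{r. r < p \<and> y r < y s} \<subset> {r. r < p \<and> y r < y t}" using assms by auto
  thus "rk y p s < rk y p t" unfolding rk_def by (intro psubset_card_mono) auto
next
  assume *: "rk y p s < rk y p t"
  show "y s < y t"
  proof (rule ccontr)
    assume "\<not> y s < y t"
    hence "{r. r < p \<and> y r < y t} \<subseteq> {r. r < p \<and> y r < y s}" by auto
    hence "rk y p t \<le> rk y p s" unfolding rk_def by (intro card_mono) auto
    thus False using * by simp
  qed
qed

lemma pot_char:
  fixes g :: "real \<Rightarrow> real"
  assumes p1: "p \<ge> 1" and per: "(g^^p) x = x" and ex: "\<forall>k\<in>{1..<p}. (g^^k) x \<noteq> x"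
    and sig: "\<forall>i\<in>{1..p}. \<sigma> i \<in> {1..p}"
  shows "periodic_order_type g x p \<sigma> \<longleftrightarrow>
    (\<forall>t<p. \<sigma> (rk (\<lambda>k. (g^^k) x) p t + 1) = rk (\<lambda>k. (g^^k) x) p (Suc t mod p) + 1)"
proof -
  define y where "y = (\<lambda>k. (g^^k) x)"
  define A where "A = y ` {..<p}"
  define xs where "xs = sorted_list_of_set A"
  have inj: "inj_on y {..<p}" unfolding y_def using orbit_inj[OF per ex] .
  have finA: "finite A" unfolding A_def by simp
  have cardA: "card A = p" unfolding A_def using inj by (simp add: card_image)
  have lenxs: "length xs = p" unfolding xs_def using cardA finA by simp
  have dxs: "distinct xs" and setxs: "set xs = A" unfolding xs_def using finA by auto
  have rkA: "card {b\<in>A. b < y t} = rk y p t" if "t < p" for t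
  proof -
    have "{b\<in>A. b < y t} = y ` {s. s < p \<and> y s < y t}" unfolding A_def by auto
    moreover have "inj_on y {s. s < p \<and> y s < y t}" using inj by (rule inj_on_subset) auto
    ultimately show ?thesis unfolding rk_def by (simp add: card_image)
  qed
  have nth: "xs ! rk y p t = y t" if "t < p" for t
    using sorted_nth_card[OF finA, of "y t"] rkA[OF that] that unfolding xs_def A_def by auto
  have gy: "g (y t) = y (Suc t mod p)" for t
    unfolding y_def using orbit_mod[OF per, of "Suc t"] by simp
  have modlt: "Suc t mod p < p" for t using p1 by simp
  have pot: "periodic_order_type g x p \<sigma> \<longleftrightarrow> (\<forall>i\<in>{1..p}. g (xs ! (i - 1)) = xs ! (\<sigma> i - 1))"
    unfolding periodic_order_type_def Let_def xs_def A_def y_def using p1 per ex by auto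
  show ?thesis unfolding pot y_def[symmetric]
  proof
    assume H: "\<forall>i\<in>{1..p}. g (xs ! (i - 1)) = xs ! (\<sigma> i - 1)"
    show "\<forall>t<p. \<sigma> (rk y p t + 1) = rk y p (Suc t mod p) + 1"
    proof (intro allI impI)
      fix t assume t: "t < p"
      have i: "rk y p t + 1 \<in> {1..p}" using rk_lt[of t p y, OF t] by simp
      have "xs ! (\<sigma> (rk y p t + 1) - 1) = g (xs ! (rk y p t + 1 - 1))" using H i by metis
      also have "\<dots> = g (y t)" using nth[OF t] by simp
      also have "\<dots> = xs ! rk y p (Suc t mod p)" using gy nth[OF modlt] by simp
      finally have E: "xs ! (\<sigma> (rk y p t + 1) - 1) = xs ! rk y p (Suc t mod p)" .
      have L1: "\<sigma> (rk y p t + 1) - 1 < length xs" using sig i lenxs by force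
      have L2: "rk y p (Suc t mod p) < length xs" using rk_lt[of "Suc t mod p" p y, OF modlt] lenxs by simp
      have "\<sigma> (rk y p t + 1) - 1 = rk y p (Suc t mod p)"
        using nth_eq_iff_index_eq[OF dxs L1 L2] E by blast
      thus "\<sigma> (rk y p t + 1) = rk y p (Suc t mod p) + 1" using sig i by force
    qed
  next
    assume H: "\<forall>t<p. \<sigma> (rk y p t + 1) = rk y p (Suc t mod p) + 1"
    show "\<forall>i\<in>{1..p}. g (xs ! (i - 1)) = xs ! (\<sigma> i - 1)"
    proof
      fix i assume i: "i \<in> {1..p}"
      have "xs ! (i - 1) \<in> A" using i lenxs setxs by (metis atLeastAtMost_iff diff_less less_le_trans nth_mem zero_less_one)
      then obtain t where t: "t < p" "xs ! (i - 1) = y t" unfolding A_def by auto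
      have "xs ! rk y p t = xs ! (i - 1)" using nth[OF t(1)] t by simp
      moreover have "rk y p t < length xs" using lenxs rk_lt[of t p y, OF t(1)] by simp
      moreover have "i - 1 < length xs" using lenxs i by auto
      ultimately have "rk y p t = i - 1" using nth_eq_iff_index_eq[OF dxs] by blast
      hence "\<sigma> i = rk y p (Suc t mod p) + 1" using H t i by force
      thus "g (xs ! (i - 1)) = xs ! (\<sigma> i - 1)" using t gy nth[OF modlt] by simp
    qed
  qed
qed



lemma pot_basic:
  assumes "periodic_order_type g x p \<sigma>"
  shows "p \<ge> 1" "(g^^p) x = x" "\<forall>k\<in>{1..<p}. (g^^k) x \<noteq> x"
  using assms unfolding periodic_order_type_def by auto

lemma pot_transfer:
  fixes g g' :: "real \<Rightarrow> real"
  assumes pot: "periodic_order_type g x p \<sigma>" and sig: "\<forall>i\<in>{1..p}. \<sigma> i \<in> {1..p}"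
    and per': "(g'^^p) x' = x'"
    and pat: "\<forall>s<p. \<forall>t<p. ((g^^s) x < (g^^t) x) = ((g'^^s) x' < (g'^^t) x')"
  shows "periodic_order_type g' x' p \<sigma>"
proof -
  note b = pot_basic[OF pot]
  have inj: "inj_on (\<lambda>k. (g^^k) x) {..<p}" using orbit_inj[OF b(2) b(3)] .
  have inj': "(g'^^s) x' = (g'^^t) x' \<Longrightarrow> s < p \<Longrightarrow> t < p \<Longrightarrow> s = t" for s t
  proof (rule ccontr)
    assume h: "(g'^^s) x' = (g'^^t) x'" "s < p" "t < p" "s \<noteq> t"
    hence "(g^^s) x \<noteq> (g^^t) x" using inj by (auto simp: inj_on_def)
    hence "(g^^s) x < (g^^t) x \<or> (g^^t) x < (g^^s) x" by auto
    thus False using pat h by force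
  qed
  have ex': "\<forall>k\<in>{1..<p}. (g'^^k) x' \<noteq> x'"
  proof
    fix k assume k: "k \<in> {1..<p}"
    show "(g'^^k) x' \<noteq> x'"
    proof
      assume "(g'^^k) x' = x'"
      hence "(g'^^k) x' = (g'^^0) x'" by simp
      thus False using inj'[of k 0] k b(1) by auto
    qed
  qed
  have rkeq: "rk (\<lambda>k. (g^^k) x) p t = rk (\<lambda>k. (g'^^k) x') p t" if "t < p" for t
    unfolding rk_def using pat that by (metis (no_types, lifting) Collect_cong)
  have modlt: "Suc t mod p < p" for t using b(1) by simp
  show ?thesis
    using pot pot_char[OF b(1) b(2) b(3) sig] pot_char[OF b(1) per' ex' sig] rkeq modlt by auto
qed

lemma pot_rotate:
  fixes g :: "real \<Rightarrow> real"
  assumes pot: "periodic_order_type g x p \<sigma>"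
  shows "periodic_order_type g ((g^^j) x) p \<sigma>"
proof -
  note b = pot_basic[OF pot]
  have inj: "inj_on (\<lambda>k. (g^^k) x) {..<p}" using orbit_inj[OF b(2) b(3)] .
  have sh: "(g^^k) ((g^^j) x) = (g^^((k+j) mod p)) x" for k
    using orbit_mod[OF b(2), of "k+j"] by (simp add: funpow_add)
  have img: "(\<lambda>k. (g^^k) ((g^^j) x)) ` {..<p} = (\<lambda>k. (g^^k) x) ` {..<p}"
  proof
    show "(\<lambda>k. (g^^k) ((g^^j) x)) ` {..<p} \<subseteq> (\<lambda>k. (g^^k) x) ` {..<p}"
      using sh b(1) by auto
    show "(\<lambda>k. (g^^k) x) ` {..<p} \<subseteq> (\<lambda>k. (g^^k) ((g^^j) x)) ` {..<p}"
    proof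
      fix z assume "z \<in> (\<lambda>k. (g^^k) x) ` {..<p}"
      then obtain m where m: "m < p" "z = (g^^m) x" by auto
      define k where "k = (m + (p - j mod p)) mod p"
      have e1: "m + (p - j mod p) + j = m + p + (j div p) * p"
        using mod_less_divisor[of p j] div_mult_mod_eq[of j p] b(1) by linarith
      have "(k + j) mod p = (m + (p - j mod p) + j) mod p" unfolding k_def by (simp add: mod_add_left_eq)
      also have "\<dots> = m" using e1 m by simp
      finally have "(k + j) mod p = m" .
      moreover have "k < p" unfolding k_def using b(1) by simp
      ultimately show "z \<in> (\<lambda>k. (g^^k) ((g^^j) x)) ` {..<p}" using sh m by force
    qed
  qed
  have per: "(g^^p) ((g^^j) x) = (g^^j) x"
    using sh[of p] orbit_mod[OF b(2), of j] by simp
  have ex: "\<forall>k\<in>{1..<p}. (g^^k) ((g^^j) x) \<noteq> (g^^j) x"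
  proof
    fix k assume k0: "k \<in> {1..<p}"
    have k: "1 \<le> k" "k < p" using k0 by auto
    show "(g^^k) ((g^^j) x) \<noteq> (g^^j) x"
    proof
      assume "(g^^k) ((g^^j) x) = (g^^j) x"
      hence "(g^^((k+j) mod p)) x = (g^^(j mod p)) x" using sh orbit_mod[OF b(2), of j] by simp
      hence "(k+j) mod p = j mod p" using inj b(1) by (auto simp: inj_on_def)
      moreover have "(k + j) mod p = (k + j mod p) mod p" by (simp add: mod_add_right_eq)
      ultimately have E: "(k + j mod p) mod p = j mod p" by simp
      have jl: "j mod p < p" using b(1) by simp
      show False
      proof (cases "k + j mod p < p")
        case True thus False using E k by simp
      next
        case False
        hence "(k + j mod p) mod p = (k + j mod p - p) mod p" by (simp add: le_mod_geq)
        also have "\<dots> = k + j mod p - p" proof (intro mod_less)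
          show "k + j mod p - p < p" using k jl by linarith
        qed
        finally show False using E k by simp
      qed
    qed
  qed
  have "let xs = sorted_list_of_set ((\<lambda>k. (g^^k) x) ` {..<p}) in \<forall>i\<in>{1..p}. g (xs!(i-1)) = xs!(\<sigma> i - 1)"
    using pot unfolding periodic_order_type_def by blast
  then show ?thesis unfolding periodic_order_type_def img using b(1) per ex by blast
qed



lemma Tbar_iff: "w \<in> Tbar \<longleftrightarrow> 1 \<ge> fst w \<and> fst w \<ge> snd w \<and> snd w \<ge> 0"
  by (simp add: Tbar_def)

lemma saw_13: "w \<in> Tbar \<Longrightarrow> saw w (1/3) = fst w"
  by (simp add: saw_def Tbar_iff)

lemma saw_23: "w \<in> Tbar \<Longrightarrow> saw w (2/3) = snd w"
  by (simp add: saw_def Tbar_iff)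

lemma saw_nonneg: "w \<in> Tbar \<Longrightarrow> x \<ge> 0 \<Longrightarrow> saw w x \<ge> 0"
  by (auto simp: saw_def Tbar_iff max_def min_def)

lemma saw_zero: "w \<in> Tbar \<Longrightarrow> saw w 0 = 0"
  by (simp add: saw_def Tbar_iff)

lemma saw_ge1: "x \<ge> 1 \<Longrightarrow> saw w x \<ge> 1"
  by (simp add: saw_def)

lemma saw_ge1_iter: "x \<ge> 1 \<Longrightarrow> (saw w ^^ k) x \<ge> 1"
  by (induction k) (auto simp: saw_ge1)

lemma saw_zero_iter: "w \<in> Tbar \<Longrightarrow> (saw w ^^ k) 0 = 0"
  by (induction k) (auto simp: saw_zero)

lemma saw_ge_w2: "w \<in> Tbar \<Longrightarrow> x \<ge> 1/3 \<Longrightarrow> saw w x \<ge> snd w"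
  by (simp add: saw_def Tbar_iff)

lemma saw_le_w1: "w \<in> Tbar \<Longrightarrow> x \<le> 2/3 \<Longrightarrow> saw w x \<le> fst w"
  by (simp add: saw_def Tbar_iff)

lemma saw_L: "w \<in> Tbar \<Longrightarrow> x \<le> 1/3 \<Longrightarrow> saw w x \<noteq> fst w \<Longrightarrow> saw w x = 3*x"
  by (auto simp: saw_def Tbar_iff min_def split: if_splits)

lemma saw_Mid: "w \<in> Tbar \<Longrightarrow> 1/3 < x \<Longrightarrow> x \<le> 2/3 \<Longrightarrow> saw w x \<noteq> fst w \<Longrightarrow>
    saw w x = max (snd w) (2 - 3*x)"
  by (auto simp: saw_def Tbar_iff min_def)

lemma saw_Rt: "2/3 < x \<Longrightarrow> saw w x = max (3*x - 2) (snd w)"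
  by (auto simp: saw_def)

lemma orbit_nonneg: "w \<in> Tbar \<Longrightarrow> (saw w ^^ k) (1/3) \<ge> 0"
  by (induction k) (auto simp: saw_nonneg)

definition Yo :: "real \<times> real \<Rightarrow> nat \<Rightarrow> real" where
  "Yo w t = (saw w ^^ t) (1/3)"

lemma Yo_0[simp]: "Yo w 0 = 1/3" by (simp add: Yo_def)
lemma Yo_Suc: "Yo w (Suc t) = saw w (Yo w t)" by (simp add: Yo_def)
lemma Yo_1: "w \<in> Tbar \<Longrightarrow> Yo w 1 = fst w" by (simp add: Yo_def saw_13)

locale bm =
  fixes p :: nat and \<sigma> :: "nat \<Rightarrow> nat"
  assumes p2: "p \<ge> 2" and sig: "\<forall>i\<in>{1..p}. \<sigma> i \<in> {1..p}"
begin

abbreviation "B \<equiv> bone_minus p \<sigma>"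

lemma B_Tbar: "w \<in> B \<Longrightarrow> w \<in> Tbar" by (simp add: bone_minus_def)

lemma B_pot: "w \<in> B \<Longrightarrow> periodic_order_type (saw w) (1/3) p \<sigma>" by (simp add: bone_minus_def)

lemma B_per: "w \<in> B \<Longrightarrow> Yo w p = 1/3"
  using pot_basic[OF B_pot] by (simp add: Yo_def)

lemma B_mod: "w \<in> B \<Longrightarrow> Yo w t = Yo w (t mod p)"
  using orbit_mod[where g="saw w" and p=p and x="1/3"] B_per by (simp add: Yo_def)

lemma B_inj: "w \<in> B \<Longrightarrow> s < p \<Longrightarrow> t < p \<Longrightarrow> Yo w s = Yo w t \<Longrightarrow> s = t"
  using orbit_inj[where g="saw w" and p=p and x="1/3"] pot_basic[OF B_pot] unfolding Yo_def inj_on_def by blast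

lemma B_inj_mod: "w \<in> B \<Longrightarrow> Yo w s = Yo w t \<Longrightarrow> s mod p = t mod p"
  using B_inj[of w "s mod p" "t mod p"] B_mod[of w s] B_mod[of w t] p2 by simp

lemma B_w1_max: assumes w: "w \<in> B" shows "Yo w t \<le> fst w"
proof -
  have T: "w \<in> Tbar" using B_Tbar w .
  have fin: "finite (Yo w ` {..<p})" by simp
  have "0 \<in> {..<p}" using p2 by simp
  hence ne: "Yo w ` {..<p} \<noteq> {}" by blast
  define M where "M = Max (Yo w ` {..<p})"
  have allM: "Yo w n \<le> M" for n
  proof -
    have "Yo w (n mod p) \<in> Yo w ` {..<p}" using p2 by simp
    thus ?thesis using B_mod[OF w, of n] fin M_def by simp
  qed
  obtain t0 where t0: "t0 < p" "Yo w t0 = M" using Max_in[OF fin ne] M_def by auto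
  have "M \<le> fst w"
  proof (rule ccontr)
    assume H: "\<not> M \<le> fst w"
    define z where "z = Yo w (t0 + p - 1)"
    have "(t0 + p) mod p = t0" using t0 by simp
    hence "Yo w (t0 + p) = M" using B_mod[OF w, of "t0+p"] t0 by metis
    moreover have "t0 + p = Suc (t0 + p - 1)" using p2 by simp
    ultimately have Mz: "M = saw w z" unfolding z_def by (metis Yo_Suc)
    have zle: "z \<le> M" using allM z_def by simp
    have "z > 2/3"
    proof (rule ccontr)
      assume "\<not> z > 2/3"
      hence "saw w z \<le> fst w" using saw_le_w1[OF T] by simp
      thus False using H Mz by simp
    qed
    hence "M = max (3*z - 2) (snd w)" using Mz saw_Rt by simp
    moreover have "snd w < M" using H T unfolding Tbar_iff by simp
    ultimately have "M = 3*z - 2" by (auto simp: max_def split: if_splits)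
    hence z1: "z \<ge> 1" using zle by simp
    have ge: "Yo w (t0 + p - 1 + k) \<ge> 1" for k
      using saw_ge1_iter[OF z1, where w=w and k=k] unfolding z_def Yo_def by (simp only: funpow_add comp_apply add.commute)
    have eq: "Yo w (t0 + p - 1 + (Suc p - t0)) = 1/3"
    proof -
      have "t0 + p - 1 + (Suc p - t0) = 2*p" using t0 p2 by simp
      moreover have "Yo w (2*p) = Yo w 0" using B_mod[OF w, of "2*p"] by simp
      ultimately show ?thesis by simp
    qed
    show False using ge[of "Suc p - t0"] eq by simp
  qed
  thus ?thesis using allM[of t] by simp
qed

lemma B_w1_gt: assumes w: "w \<in> B" "t mod p \<noteq> 1" shows "Yo w t < fst w"
proof -
  have "Yo w t \<noteq> Yo w 1"
  proof
    assume "Yo w t = Yo w 1"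
    hence "t mod p = 1 mod p" using B_inj_mod[OF w(1)] by blast
    thus False using w(2) p2 by simp
  qed
  thus ?thesis using B_w1_max[OF w(1), of t] Yo_1[OF B_Tbar[OF w(1)]] by simp
qed

lemma B_w1_third: "w \<in> B \<Longrightarrow> fst w > 1/3"
  using B_w1_gt[of w 0] p2 by simp

lemma B_w1_lt1: assumes w: "w \<in> B" shows "fst w < 1"
proof (rule ccontr)
  assume "\<not> fst w < 1"
  hence "Yo w 1 \<ge> 1" using Yo_1[OF B_Tbar[OF w]] by simp
  hence "(saw w ^^ (p - 1)) (Yo w 1) \<ge> 1" using saw_ge1_iter[where x="Yo w 1" and w=w and k="p - 1"] by simp
  moreover have "(saw w ^^ (p - 1)) (Yo w 1) = Yo w (p - 1 + 1)" unfolding Yo_def by (simp only: funpow_add comp_apply)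
  ultimately show False using B_per[OF w] p2 by simp
qed

lemma B_ne_w1: assumes w: "w \<in> B" and t: "1 \<le> t" "t < p" shows "saw w (Yo w t) \<noteq> fst w"
proof -
  have "saw w (Yo w t) = Yo w (Suc t)" by (simp add: Yo_Suc)
  moreover have "Suc t mod p \<noteq> 1" using t p2 by (cases "Suc t = p") auto
  ultimately show ?thesis using B_w1_gt[OF w, of "Suc t"] by simp
qed

end


context bm begin

lemma Yo_eta: "Yo w = (\<lambda>k. (saw w ^^ k) (1/3))" by (simp add: Yo_def fun_eq_iff)

lemma B_char: assumes w: "w \<in> B"
  shows "\<forall>t<p. \<sigma> (rk (Yo w) p t + 1) = rk (Yo w) p (Suc t mod p) + 1"
  using pot_char[OF pot_basic[OF B_pot[OF w]] sig] B_pot[OF w] unfolding Yo_eta by blast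

lemma B_rk1: assumes w: "w \<in> B" shows "rk (Yo w) p 1 = p - 1"
proof -
  have "{s. s < p \<and> Yo w s < Yo w 1} = {..<p} - {1}"
  proof
    show "{s. s < p \<and> Yo w s < Yo w 1} \<subseteq> {..<p} - {1}" by auto
    show "{..<p} - {1} \<subseteq> {s. s < p \<and> Yo w s < Yo w 1}"
      using B_w1_gt[OF w] Yo_1[OF B_Tbar[OF w]] by auto
  qed
  thus ?thesis unfolding rk_def using p2 by simp
qed

lemma B_rk_eq: assumes w: "w \<in> B" and w': "w' \<in> B" and t: "t < p"
  shows "rk (Yo w) p t = rk (Yo w') p t"
proof -
  have "\<forall>n. 1 \<le> n \<longrightarrow> n \<le> p \<longrightarrow> rk (Yo w) p (n mod p) = rk (Yo w') p (n mod p)"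
  proof (intro allI)
    fix n show "1 \<le> n \<longrightarrow> n \<le> p \<longrightarrow> rk (Yo w) p (n mod p) = rk (Yo w') p (n mod p)"
    proof (induction n)
      case 0 thus ?case by simp
    next
      case (Suc n)
      show ?case
      proof (intro impI)
        assume h: "1 \<le> Suc n" "Suc n \<le> p"
        show "rk (Yo w) p (Suc n mod p) = rk (Yo w') p (Suc n mod p)"
        proof (cases "n = 0")
          case True thus ?thesis using B_rk1[OF w] B_rk1[OF w'] p2 by simp
        next
          case False
          hence n: "n < p" "1 \<le> n" "n mod p = n" using h by auto
          have "rk (Yo w) p n = rk (Yo w') p n" using Suc.IH n by simp
          hence "rk (Yo w) p (Suc n mod p) + 1 = rk (Yo w') p (Suc n mod p) + 1"
            using B_char[OF w] B_char[OF w'] n(1) by metis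
          thus ?thesis by simp
        qed
      qed
    qed
  qed
  note H = this
  show ?thesis
  proof (cases "t = 0")
    case True thus ?thesis using H[rule_format, of p] p2 by simp
  next
    case False thus ?thesis using H[rule_format, of t] t by simp
  qed
qed

lemma B_pat: assumes w: "w \<in> B" and w': "w' \<in> B"
  shows "(Yo w s < Yo w t) = (Yo w' s < Yo w' t)"
proof -
  have p0: "0 < p" using p2 by simp
  have inj: "inj_on (Yo v) {..<p}" if "v \<in> B" for v
    using B_inj[OF that] by (auto simp: inj_on_def)
  have "(Yo w (s mod p) < Yo w (t mod p)) = (Yo w' (s mod p) < Yo w' (t mod p))"
    using rk_mono_iff[OF inj[OF w]] rk_mono_iff[OF inj[OF w']] B_rk_eq[OF w w'] p0
    by (metis mod_less_divisor)
  thus ?thesis using B_mod[OF w, of s] B_mod[OF w, of t] B_mod[OF w', of s] B_mod[OF w', of t] by simp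
qed

lemma B_eq_iff: assumes w: "w \<in> B" shows "(Yo w s = Yo w t) = (s mod p = t mod p)"
  using B_inj_mod[OF w] B_mod[OF w, of s] B_mod[OF w, of t] by metis

end

locale bm0 = bm +
  fixes w0 :: "real \<times> real"
  assumes w0: "w0 \<in> B"
begin

definition y where "y = Yo w0"
definition JJ where "JJ = {t. 1 \<le> t \<and> t < p \<and> y t > 1/3}"
definition j where "j = arg_min_on (\<lambda>t. y (Suc t)) JJ"
definition h where "h = y (Suc j)"

lemma JJ_fin: "finite JJ" unfolding JJ_def by (rule finite_subset[of _ "{..<p}"]) auto

lemma JJ_ne: "1 \<in> JJ"
  unfolding JJ_def y_def using p2 Yo_1[OF B_Tbar[OF w0]] B_w1_third[OF w0] by simp

lemma j_props: "j \<in> JJ" "\<And>t. t \<in> JJ \<Longrightarrow> y (Suc j) \<le> y (Suc t)"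
proof -
  have "JJ \<noteq> {}" using JJ_ne by blast
  from arg_min_if_finite[OF JJ_fin this, of "\<lambda>t. y (Suc t)"]
  show "j \<in> JJ" "\<And>t. t \<in> JJ \<Longrightarrow> y (Suc j) \<le> y (Suc t)" unfolding j_def by (auto simp: not_less)
qed

lemma j_ge1: "1 \<le> j" and j_lt: "j < p" and y_j: "y j > 1/3"
  using j_props(1) unfolding JJ_def by auto

end



context bm0 begin

lemma suc_mod_inj: assumes "a < p" "b < p" "Suc a mod p = Suc b mod p" shows "a = b"
proof -
  have ma: "Suc a mod p = (if Suc a = p then 0 else Suc a)" using assms(1) by auto
  have mb: "Suc b mod p = (if Suc b = p then 0 else Suc b)" using assms(2) by auto
  show ?thesis using assms(3) unfolding ma mb by (auto split: if_splits)
qed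

lemma pat0: "w \<in> B \<Longrightarrow> (y s < y t) = (Yo w s < Yo w t)"
  unfolding y_def using B_pat[OF w0] by blast

lemma y_eq_iff: "(y s = y t) = (s mod p = t mod p)"
  unfolding y_def using B_eq_iff[OF w0] .

lemma B_succ_gt: assumes w: "w \<in> B" and t: "1 \<le> t" "t < p" "y t > 1/3" "t \<noteq> j"
  shows "Yo w (Suc t) > Yo w (Suc j)"
proof -
  have "t \<in> JJ" using t unfolding JJ_def by auto
  hence le: "y (Suc j) \<le> y (Suc t)" using j_props(2) by blast
  have "Suc j mod p \<noteq> Suc t mod p"
    using t j_lt suc_mod_inj by blast
  hence "y (Suc j) \<noteq> y (Suc t)" using y_eq_iff by blast
  hence "y (Suc j) < y (Suc t)" using le by simp
  thus ?thesis using pat0[OF w] by blast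
qed

lemma lapL: assumes w: "w \<in> B" and t: "1 \<le> t" "t < p" "y t < 1/3"
  shows "saw w (Yo w t) = 3 * Yo w t \<and> Yo w t < fst w / 3"
proof -
  have T: "w \<in> Tbar" using B_Tbar[OF w] .
  have x: "Yo w t < 1/3" using pat0[OF w, of t 0] t y_def by simp
  have ne: "saw w (Yo w t) \<noteq> fst w" using B_ne_w1[OF w t(1,2)] .
  have e: "saw w (Yo w t) = 3 * Yo w t" using saw_L[OF T _ ne] x by simp
  have "saw w (Yo w t) \<le> fst w" using saw_le_w1[OF T] x by simp
  thus ?thesis using e ne by simp
qed

lemma lap_j: assumes w: "w \<in> B" shows "Yo w j > 1/3"
  using pat0[OF w, of 0 j] y_j y_def by simp

lemma lapM: assumes w: "w \<in> B" and t: "1 \<le> t" "t < p" "y t > 1/3" "y t < y j"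
  shows "Yo w t \<le> 2/3 \<and> saw w (Yo w t) = 2 - 3 * Yo w t \<and> 2 - 3 * Yo w t < fst w"
proof -
  have T: "w \<in> Tbar" using B_Tbar[OF w] .
  have tj: "t \<noteq> j" using t by auto
  define x where "x = Yo w t"
  define z where "z = Yo w j"
  have x13: "x > 1/3" using pat0[OF w, of 0 t] t y_def x_def by simp
  have z13: "z > 1/3" using lap_j[OF w] z_def by simp
  have xz: "x < z" using pat0[OF w, of t j] t x_def z_def by simp
  have gt: "saw w x > saw w z" using B_succ_gt[OF w t(1,2,3) tj] Yo_Suc x_def z_def by simp
  have nex: "saw w x \<noteq> fst w" using B_ne_w1[OF w t(1,2)] x_def by simp
  have x23: "x \<le> 2/3"
  proof (rule ccontr)
    assume "\<not> x \<le> 2/3"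
    hence "saw w x = max (3*x - 2) (snd w)" "saw w z = max (3*z - 2) (snd w)"
      using saw_Rt xz by auto
    hence "saw w x \<le> saw w z" using xz by (simp add: max_def)
    thus False using gt by simp
  qed
  have e1: "saw w x = max (snd w) (2 - 3*x)" using saw_Mid[OF T x13 x23 nex] .
  have "saw w z \<ge> snd w" using saw_ge_w2[OF T] z13 by simp
  hence e2: "saw w x = 2 - 3*x" using e1 gt by (auto simp: max_def split: if_splits)
  have "saw w x \<le> fst w" using saw_le_w1[OF T x23] .
  thus ?thesis using e2 nex x23 x_def by simp
qed

lemma lapR: assumes w: "w \<in> B" and t: "1 \<le> t" "t < p" "y t > y j"
  shows "Yo w t > 2/3 \<and> saw w (Yo w t) = 3 * Yo w t - 2"
proof -
  have T: "w \<in> Tbar" using B_Tbar[OF w] .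
  have tj: "t \<noteq> j" using t by auto
  have t13: "y t > 1/3" using t y_j by simp
  define x where "x = Yo w t"
  define z where "z = Yo w j"
  have z13: "z > 1/3" using lap_j[OF w] z_def by simp
  have xz: "x > z" using pat0[OF w, of j t] t x_def z_def by simp
  have gt: "saw w x > saw w z" using B_succ_gt[OF w t(1,2) t13 tj] Yo_Suc x_def z_def by simp
  have nez: "saw w z \<noteq> fst w" using B_ne_w1[OF w j_ge1 j_lt] z_def by simp
  have x23: "x > 2/3"
  proof (rule ccontr)
    assume "\<not> x > 2/3"
    hence "saw w x = max (snd w) (2 - 3*x)" "saw w z = max (snd w) (2 - 3*z)"
      using saw_Mid[OF T _ _ nez] saw_Mid[OF T _ _ B_ne_w1[OF w t(1,2)]] z13 xz x_def by auto
    hence "saw w x \<le> saw w z" using xz by (simp add: max_def)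
    thus False using gt by simp
  qed
  have e1: "saw w x = max (3*x - 2) (snd w)" using saw_Rt x23 by simp
  have "saw w z \<ge> snd w" using saw_ge_w2[OF T] z13 by simp
  hence "saw w x = 3*x - 2" using e1 gt by (auto simp: max_def split: if_splits)
  thus ?thesis using x23 x_def by simp
qed

definition Tl :: "nat \<Rightarrow> real \<Rightarrow> real" where
  "Tl t x = (if y t < 1/3 then 3*x else if y t < y j then 2 - 3*x else 3*x - 2)"

lemma B_step: assumes w: "w \<in> B" and t: "1 \<le> t" "t < p" "t \<noteq> j"
  shows "Yo w (Suc t) = Tl t (Yo w t)"
proof -
  have n0: "y t \<noteq> 1/3" using y_eq_iff[of t 0] t y_def by auto
  have nj: "y t \<noteq> y j" using y_eq_iff[of t j] t j_lt by auto
  show ?thesis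
  proof (cases "y t < 1/3")
    case True thus ?thesis using lapL[OF w t(1,2)] Yo_Suc Tl_def by simp
  next
    case False
    hence g: "y t > 1/3" using n0 by simp
    show ?thesis
    proof (cases "y t < y j")
      case True thus ?thesis using lapM[OF w t(1,2) g] Yo_Suc Tl_def g by simp
    next
      case False
      hence "y t > y j" using nj by simp
      thus ?thesis using lapR[OF w t(1,2)] Yo_Suc Tl_def g False by simp
    qed
  qed
qed

end


context bm0 begin

primrec Zf :: "real \<Rightarrow> real \<Rightarrow> nat \<Rightarrow> real" where
  "Zf a v 0 = 1/3"
| "Zf a v (Suc t) = (if t = 0 then a else if t = j then v else Tl t (Zf a v t))"

lemma B_Zf: assumes w: "w \<in> B" shows "t \<le> p \<Longrightarrow> Yo w t = Zf (fst w) (Yo w (Suc j)) t"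
proof (induction t)
  case 0 thus ?case by simp
next
  case (Suc t)
  show ?case
  proof (cases "t = 0")
    case True thus ?thesis using Yo_1[OF B_Tbar[OF w]] by simp
  next
    case False
    show ?thesis
    proof (cases "t = j")
      case True thus ?thesis using False by simp
    next
      case tj: False
      have "Yo w (Suc t) = Tl t (Yo w t)" using B_step[OF w _ _ tj] False Suc.prems by simp
      thus ?thesis using Suc False tj by simp
    qed
  qed
qed

lemma Zf_tail: "j < t \<Longrightarrow> Zf a v t = Zf a' v t"
proof (induction t)
  case 0 thus ?case by simp
next
  case (Suc t)
  show ?case
  proof (cases "t = j")
    case True thus ?thesis using j_ge1 by simp
  next
    case False
    hence "j < t" using Suc.prems by simp
    thus ?thesis using Suc.IH j_ge1 by simp
  qed
qed

lemma Zf_head: "t \<le> j \<Longrightarrow> Zf a v t = Zf a v' t"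
proof (induction t)
  case 0 thus ?case by simp
next
  case (Suc t) thus ?case by simp
qed

lemma Tl_inj: "Tl t x = Tl t x' \<Longrightarrow> x = x'"
  unfolding Tl_def by (auto split: if_splits)

lemma Zf_tail_inj: "j < t \<Longrightarrow> Zf a v t = Zf a v' t \<Longrightarrow> v = v'"
proof (induction t)
  case 0 thus ?case by simp
next
  case (Suc t)
  show ?case
  proof (cases "t = j")
    case True thus ?thesis using Suc.prems j_ge1 by simp
  next
    case False
    hence "j < t" using Suc.prems by simp
    moreover have "Zf a v t = Zf a v' t" using Suc.prems False \<open>j < t\<close> j_ge1 Tl_inj by simp
    ultimately show ?thesis using Suc.IH by simp
  qed
qed

lemma y_Suc_j: "Yo w0 (Suc j) = h" unfolding h_def y_def ..

lemma B_h: assumes w: "w \<in> B" shows "Yo w (Suc j) = h"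
proof -
  have "Zf (fst w) (Yo w (Suc j)) p = 1/3" using B_Zf[OF w, of p] B_per[OF w] by simp
  moreover have "Zf (fst w0) h p = 1/3" using B_Zf[OF w0, of p] B_per[OF w0] y_Suc_j by simp
  moreover have "Zf (fst w0) h p = Zf (fst w) h p" using Zf_tail j_lt by blast
  ultimately show ?thesis using Zf_tail_inj[OF j_lt] by metis
qed

lemma B_Z: "w \<in> B \<Longrightarrow> t \<le> p \<Longrightarrow> Yo w t = Zf (fst w) h t"
  using B_Zf B_h by simp

lemma sucj_mod: "Suc j mod p \<noteq> 1"
  using j_ge1 j_lt by (cases "Suc j = p") auto

lemma h_lt: "w \<in> B \<Longrightarrow> h < fst w"
  using B_w1_gt[of w "Suc j"] sucj_mod B_h by simp

lemma h_pos: "h > 0"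
proof -
  have T: "w0 \<in> Tbar" using B_Tbar[OF w0] .
  have ge: "h \<ge> 0" using orbit_nonneg[OF T, of "Suc j"] y_Suc_j Yo_def by simp
  have "h \<noteq> 0"
  proof
    assume "h = 0"
    have e: "Yo w0 (k + Suc j) = (saw w0 ^^ k) (Yo w0 (Suc j))" for k
      unfolding Yo_def by (simp only: funpow_add comp_apply)
    have z: "Yo w0 (k + Suc j) = 0" for k
      using e[of k] saw_zero_iter[OF T, of k] y_Suc_j \<open>h = 0\<close> by simp
    have "2 * p - Suc j + Suc j = 2 * p" using j_lt by simp
    hence "Yo w0 (2*p) = 0" using z[of "2 * p - Suc j"] by simp
    moreover have "Yo w0 (2*p) = 1/3" using B_mod[OF w0, of "2*p"] by simp
    ultimately show False by simp
  qed
  thus ?thesis using ge by simp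
qed

lemma h_lt1: "h < 1" using h_lt[OF w0] B_Tbar[OF w0] Tbar_iff by fastforce

definition F where "F a = Zf a h j"

lemma B_F: "w \<in> B \<Longrightarrow> Yo w j = F (fst w)"
  unfolding F_def using B_Z j_lt by simp

lemma Zf_aff: "\<exists>\<alpha> \<beta>. \<forall>a. Zf a h t = \<alpha> * a + \<beta>"
proof (induction t)
  case 0 thus ?case by (intro exI[of _ 0] exI[of _ "1/3"]) simp
next
  case (Suc t)
  then obtain \<alpha> \<beta> where ab: "\<forall>a. Zf a h t = \<alpha> * a + \<beta>" by blast
  show ?case
  proof (cases "t = 0")
    case True thus ?thesis by (intro exI[of _ 1] exI[of _ 0]) simp
  next
    case False
    show ?thesis
    proof (cases "t = j")
      case True thus ?thesis using False by (intro exI[of _ 0] exI[of _ h]) simp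
    next
      case False2: False
      show ?thesis
      proof (cases "y t < 1/3")
        case True thus ?thesis using False False2 ab
          by (intro exI[of _ "3*\<alpha>"] exI[of _ "3*\<beta>"]) (simp add: Tl_def algebra_simps)
      next
        case nL: False
        show ?thesis
        proof (cases "y t < y j")
          case True thus ?thesis using False False2 ab nL
            by (intro exI[of _ "-3*\<alpha>"] exI[of _ "2 - 3*\<beta>"]) (simp add: Tl_def algebra_simps)
        next
          case False3: False
          thus ?thesis using False False2 ab nL
            by (intro exI[of _ "3*\<alpha>"] exI[of _ "3*\<beta> - 2"]) (simp add: Tl_def algebra_simps)
        qed
      qed
    qed
  qed
qed

lemma Zf_aff_nz: "1 \<le> t \<Longrightarrow> t \<le> j \<Longrightarrow> \<exists>\<alpha> \<beta>. \<alpha> \<noteq> 0 \<and> (\<forall>a. Zf a h t = \<alpha> * a + \<beta>)"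
proof (induction t)
  case 0 thus ?case by simp
next
  case (Suc t)
  show ?case
  proof (cases "t = 0")
    case True thus ?thesis by (intro exI[of _ 1] exI[of _ 0]) simp
  next
    case False
    then obtain \<alpha> \<beta> where ab: "\<alpha> \<noteq> 0" "\<forall>a. Zf a h t = \<alpha> * a + \<beta>" using Suc by auto
    have False2: "t \<noteq> j" using Suc.prems by simp
    show ?thesis
    proof (cases "y t < 1/3")
      case True thus ?thesis using False False2 ab
        by (intro exI[of _ "3*\<alpha>"] exI[of _ "3*\<beta>"]) (simp add: Tl_def algebra_simps)
    next
      case nL: False
      show ?thesis
      proof (cases "y t < y j")
        case True thus ?thesis using False False2 ab nL
          by (intro exI[of _ "-3*\<alpha>"] exI[of _ "2 - 3*\<beta>"]) (simp add: Tl_def algebra_simps)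
      next
        case False3: False
        thus ?thesis using False False2 ab nL
          by (intro exI[of _ "3*\<alpha>"] exI[of _ "3*\<beta> - 2"]) (simp add: Tl_def algebra_simps)
      qed
    qed
  qed
qed

lemma Zf_cont: "continuous_on UNIV (\<lambda>a. Zf a h t)"
proof -
  obtain \<alpha> \<beta> where "\<forall>a. Zf a h t = \<alpha> * a + \<beta>" using Zf_aff by blast
  hence eq: "(\<lambda>a. Zf a h t) = (\<lambda>a. \<alpha> * a + \<beta>)" by auto
  show ?thesis unfolding eq by (intro continuous_intros)
qed

lemma B_shape: assumes w: "w \<in> B"
  shows "(snd w = h \<and> (2-h)/3 \<le> F (fst w) \<and> F (fst w) \<le> (2+h)/3) \<or>
         ((F (fst w) = (2-h)/3 \<or> F (fst w) = (2+h)/3) \<and> 0 \<le> snd w \<and> snd w \<le> h)"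
proof -
  have T: "w \<in> Tbar" using B_Tbar[OF w] .
  define x where "x = F (fst w)"
  have x13: "x > 1/3" using lap_j[OF w] B_F[OF w] x_def by simp
  have sx: "saw w x = h" using B_h[OF w] B_F[OF w] Yo_Suc x_def by metis
  have ne: "saw w x \<noteq> fst w" using B_ne_w1[OF w j_ge1 j_lt] B_F[OF w] x_def by simp
  have w2: "0 \<le> snd w" using T Tbar_iff by simp
  show ?thesis
  proof (cases "x \<le> 2/3")
    case True
    hence "h = max (snd w) (2 - 3*x)" using saw_Mid[OF T x13 True ne] sx by simp
    thus ?thesis using True w2 h_pos x_def by (auto simp: max_def split: if_splits)
  next
    case False
    hence "h = max (3*x - 2) (snd w)" using saw_Rt sx by simp
    thus ?thesis using False w2 h_pos x_def by (auto simp: max_def split: if_splits)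
  qed
qed

end


context bm0 begin

definition Fa where "Fa = (SOME ab. fst ab \<noteq> 0 \<and> (\<forall>a. F a = fst ab * a + snd ab))"

lemma Fa_ex: "\<exists>ab. fst ab \<noteq> 0 \<and> (\<forall>a. F a = fst ab * a + snd ab)"
proof -
  obtain \<alpha> \<beta> where ab: "\<alpha> \<noteq> 0" "\<forall>a. Zf a h j = \<alpha> * a + \<beta>" using Zf_aff_nz[OF j_ge1 order.refl] by blast
  show ?thesis
  proof (rule exI[of _ "(\<alpha>, \<beta>)"])
    show "fst (\<alpha>, \<beta>) \<noteq> 0 \<and> (\<forall>a. F a = fst (\<alpha>, \<beta>) * a + snd (\<alpha>, \<beta>))"
      using ab unfolding F_def by simp
  qed
qed

lemma Fa_both: "fst Fa \<noteq> 0 \<and> (\<forall>a. F a = fst Fa * a + snd Fa)"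
  unfolding Fa_def by (rule someI_ex[OF Fa_ex])

lemma Fa_props: "fst Fa \<noteq> 0" "F a = fst Fa * a + snd Fa"
  using Fa_both by blast+

definition aM where "aM = ((2-h)/3 - snd Fa) / fst Fa"
definition aR where "aR = ((2+h)/3 - snd Fa) / fst Fa"
definition a1 where "a1 = min aM aR"
definition a2 where "a2 = max aM aR"

lemma F_aM: "F aM = (2-h)/3" and F_aR: "F aR = (2+h)/3"
  using Fa_props unfolding aM_def aR_def by (auto simp: field_simps)

lemma F_inj: "F a = F b \<Longrightarrow> a = b"
proof -
  assume "F a = F b"
  hence "fst Fa * a = fst Fa * b" using Fa_props(2)[of a] Fa_props(2)[of b] by simp
  thus "a = b" using Fa_props(1) by simp
qed

lemma a12: "a1 < a2"
proof -
  have "aM \<noteq> aR" using F_aM F_aR h_pos by auto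
  thus ?thesis unfolding a1_def a2_def by (simp add: min_def max_def)
qed

lemma ends_iff: "(F a = (2-h)/3 \<or> F a = (2+h)/3) \<longleftrightarrow> (a = a1 \<or> a = a2)"
proof
  assume "F a = (2-h)/3 \<or> F a = (2+h)/3"
  hence "a = aM \<or> a = aR" using F_aM F_aR F_inj by metis
  thus "a = a1 \<or> a = a2" unfolding a1_def a2_def by (cases "aM \<le> aR") (auto simp: min_def max_def)
next
  assume "a = a1 \<or> a = a2"
  hence "a = aM \<or> a = aR" unfolding a1_def a2_def by (cases "aM \<le> aR") (auto simp: min_def max_def)
  thus "F a = (2-h)/3 \<or> F a = (2+h)/3" using F_aM F_aR by auto
qed

lemma I_iff: "((2-h)/3 \<le> F a \<and> F a \<le> (2+h)/3) \<longleftrightarrow> (a1 \<le> a \<and> a \<le> a2)"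
proof -
  have hp: "(2-h)/3 < (2+h)/3" using h_pos by simp
  define al where "al = fst Fa"
  define be where "be = snd Fa"
  have F: "F x = al * x + be" for x using Fa_props al_def be_def by simp
  have aMd: "aM = ((2-h)/3 - be)/al" and aRd: "aR = ((2+h)/3 - be)/al" using aM_def aR_def al_def be_def by auto
  show ?thesis
  proof (cases "al > 0")
    case True
    have "aM < aR" unfolding aMd aRd using True hp by (simp add: divide_strict_right_mono)
    hence "a1 = aM" "a2 = aR" unfolding a1_def a2_def by auto
    moreover have e1: "aM \<le> a \<longleftrightarrow> (2-h)/3 - be \<le> a * al" unfolding aMd using pos_divide_le_eq[OF True] by blast
    moreover have e2: "a \<le> aR \<longleftrightarrow> a * al \<le> (2+h)/3 - be" unfolding aRd using pos_le_divide_eq[OF True] by blast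
    ultimately show ?thesis unfolding F by (smt (verit) mult.commute)
  next
    case False
    hence neg: "al < 0" using Fa_props(1) al_def by (simp add: less_le)
    have "aR < aM" unfolding aMd aRd using neg hp by (simp add: divide_strict_right_mono_neg)
    hence "a1 = aR" "a2 = aM" unfolding a1_def a2_def by auto
    moreover have e1: "aR \<le> a \<longleftrightarrow> a * al \<le> (2+h)/3 - be" unfolding aRd using neg_divide_le_eq[OF neg] by blast
    moreover have e2: "a \<le> aM \<longleftrightarrow> (2-h)/3 - be \<le> a * al" unfolding aMd using neg_le_divide_eq[OF neg] by blast
    ultimately show ?thesis unfolding F by (smt (verit) mult.commute)
  qed
qed

lemma I_strict_iff: "((2-h)/3 < F a \<and> F a < (2+h)/3) \<longleftrightarrow> (a1 < a \<and> a < a2)"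
proof -
  have "(2-h)/3 \<noteq> (2+h)/3" using h_pos by simp
  thus ?thesis using I_iff[of a] ends_iff[of a] a12 by (smt (verit))
qed

end


lemma ev_h: assumes "h \<le> a" "0 < h" "h < 1" "(2-h)/3 \<le> x" "x \<le> (2+h)/3" shows "saw (a,h) x = h"
  using assms unfolding saw_def by (auto simp: min_def max_def field_simps)

lemma ev_j1: assumes "0 \<le> b" "b \<le> h" "h < a" "h < 1" shows "saw (a,b) ((2-h)/3) = h"
  using assms unfolding saw_def by (auto simp: min_def max_def field_simps)

lemma ev_j2: assumes "0 < h" "b \<le> h" shows "saw (a,b) ((2+h)/3) = h"
  using assms unfolding saw_def by (auto simp: min_def max_def field_simps)

lemma ev_L: assumes "x \<le> a/3" "a \<le> 1" shows "saw (a,b) x = 3*x"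
  using assms unfolding saw_def by (auto simp: min_def max_def field_simps)

lemma ev_M: assumes "(2-a)/3 \<le> x" "x \<le> (2-h)/3" "b \<le> h" "a \<le> 1" "h \<le> a" "0 \<le> h" shows "saw (a,b) x = 2 - 3*x"
  using assms unfolding saw_def by (auto simp: min_def max_def field_simps)

lemma ev_R: assumes "(2+h)/3 \<le> x" "b \<le> h" "0 < h" shows "saw (a,b) x = 3*x - 2"
  using assms unfolding saw_def by (auto simp: min_def max_def field_simps)

lemma orbit_agree:
  assumes "\<forall>t<p. g' ((g^^t) x) = g ((g^^t) x)"
  shows "t \<le> p \<Longrightarrow> (g'^^t) x = (g^^t) x"
proof (induction t)
  case 0 thus ?case by simp
next
  case (Suc t) thus ?case using assms by simp
qed

context bm begin

lemma B_transfer: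
  assumes w: "w \<in> B" and T: "w' \<in> Tbar" and ag: "\<forall>t<p. saw w' (Yo w t) = saw w (Yo w t)"
  shows "w' \<in> B"
proof -
  have eq: "(saw w' ^^ t) (1/3) = (saw w ^^ t) (1/3)" if "t \<le> p" for t
    using orbit_agree[of p "saw w'" "saw w" "1/3"] ag that unfolding Yo_def by blast
  have per: "(saw w' ^^ p) (1/3) = 1/3" using eq[of p] B_per[OF w] Yo_def by simp
  have "periodic_order_type (saw w') (1/3) p \<sigma>"
    by (rule pot_transfer[OF B_pot[OF w] sig per]) (simp add: eq)
  thus ?thesis using T unfolding bone_minus_def by simp
qed

end

context bm0 begin

lemma agree_nonj:
  assumes w: "w \<in> B" and a: "fst w' = fst w" and b: "0 \<le> snd w'" "snd w' \<le> h"
    and t: "1 \<le> t" "t < p" "t \<noteq> j"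
  shows "saw w' (Yo w t) = saw w (Yo w t)"
proof -
  have T: "w \<in> Tbar" using B_Tbar[OF w] .
  obtain a0 b0 where w'eq: "w' = (a0, b0)" by (cases w')
  have a1: "fst w \<le> 1" using T Tbar_iff by simp
  have hw: "h < fst w" using h_lt[OF w] .
  have n0: "y t \<noteq> 1/3" using y_eq_iff[of t 0] t y_def by auto
  have nj: "y t \<noteq> y j" using y_eq_iff[of t j] t j_lt by auto
  have gtS: "y t > 1/3 \<Longrightarrow> saw w (Yo w t) > h" using B_succ_gt[OF w t(1,2) _ t(3)] B_h[OF w] Yo_Suc by simp
  show ?thesis
  proof (cases "y t < 1/3")
    case True
    from lapL[OF w t(1,2) True] have "saw w (Yo w t) = 3 * Yo w t" "Yo w t < fst w / 3" by auto
    thus ?thesis using ev_L[of "Yo w t" a0 b0] a1 a w'eq by simp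
  next
    case False
    hence g: "y t > 1/3" using n0 by simp
    show ?thesis
    proof (cases "y t < y j")
      case True
      from lapM[OF w t(1,2) g True] have m: "Yo w t \<le> 2/3" "saw w (Yo w t) = 2 - 3 * Yo w t" "2 - 3 * Yo w t < fst w" by auto
      have "saw w (Yo w t) > h" using gtS g by simp
      thus ?thesis using ev_M[of a0 "Yo w t" h b0] m a1 a w'eq b hw h_pos by simp
    next
      case False
      hence r: "y t > y j" using nj by simp
      from lapR[OF w t(1,2) r] have m: "Yo w t > 2/3" "saw w (Yo w t) = 3 * Yo w t - 2" by auto
      have "saw w (Yo w t) > h" using gtS g by simp
      thus ?thesis using ev_R[of h "Yo w t" b0 a0] m w'eq b h_pos by simp
    qed
  qed
qed

lemma vert:
  assumes w: "w \<in> B" and e: "F (fst w) = (2-h)/3 \<or> F (fst w) = (2+h)/3" and b: "0 \<le> b" "b \<le> h"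
  shows "(fst w, b) \<in> B"
proof -
  have T: "w \<in> Tbar" using B_Tbar[OF w] .
  have hw: "h < fst w" using h_lt[OF w] .
  have sw: "snd w \<le> h" "0 \<le> snd w" using B_shape[OF w] T Tbar_iff by auto
  have T': "(fst w, b) \<in> Tbar" using T hw b unfolding Tbar_iff by simp
  have "\<forall>t<p. saw (fst w, b) (Yo w t) = saw w (Yo w t)"
  proof (intro allI impI)
    fix t assume t: "t < p"
    show "saw (fst w, b) (Yo w t) = saw w (Yo w t)"
    proof (cases "t = 0")
      case True thus ?thesis using saw_13[OF T] saw_13[OF T'] by simp
    next
      case False
      show ?thesis
      proof (cases "t = j")
        case True
        have Yj: "Yo w t = F (fst w)" using B_F[OF w] True by simp
        obtain a c where wac: "w = (a, c)" by (cases w)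
        have "saw (fst w, b) (Yo w t) = h \<and> saw (fst w, snd w) (Yo w t) = h"
        proof (cases "F (fst w) = (2-h)/3")
          case True
          hence yt: "Yo w t = (2-h)/3" using Yj by simp
          show ?thesis unfolding yt using ev_j1[OF b hw h_lt1] ev_j1[OF sw(2) sw(1) hw h_lt1] by blast
        next
          case False
          hence yt: "Yo w t = (2+h)/3" using Yj e by simp
          show ?thesis unfolding yt using ev_j2[OF h_pos b(2)] ev_j2[OF h_pos sw(1)] by blast
        qed
        hence "saw (fst w, b) (Yo w t) = h" "saw w (Yo w t) = h" using wac by auto
        thus ?thesis by simp
      next
        case False2: False
        show ?thesis using agree_nonj[OF w, of "(fst w, b)"] b t False False2 by simp
      qed
    qed
  qed
  thus ?thesis using B_transfer[OF w T'] by blast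
qed

end


context bm0 begin

definition lapc :: "nat \<Rightarrow> real \<Rightarrow> bool" where
  "lapc t a = (if y t < 1/3 then Zf a h t < a/3 else if y t < y j then (2-a)/3 < Zf a h t \<and> Zf a h t < (2-h)/3
               else (2+h)/3 < Zf a h t)"

definition lapw :: "nat \<Rightarrow> real \<Rightarrow> bool" where
  "lapw t a = (if y t < 1/3 then Zf a h t \<le> a/3 else if y t < y j then (2-a)/3 \<le> Zf a h t \<and> Zf a h t \<le> (2-h)/3
               else (2+h)/3 \<le> Zf a h t)"

definition good :: "real \<Rightarrow> bool" where
  "good a = (a1 \<le> a \<and> a \<le> a2 \<and> a < 1 \<and> (\<forall>s<p. \<forall>t<p. y s < y t \<longrightarrow> Zf a h s < Zf a h t) \<and>
     (\<forall>t. 1 \<le> t \<and> t < p \<and> t \<noteq> j \<longrightarrow> lapc t a))"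

lemma Zf_p: "Zf a h p = 1/3"
proof -
  have "Zf a h p = Zf (fst w0) h p" using Zf_tail j_lt by blast
  also have "\<dots> = Yo w0 p" using B_Z[OF w0, of p] by simp
  finally show ?thesis using B_per[OF w0] by simp
qed

lemma Zf_1: "Zf a h 1 = a" by simp

lemma Zf_sj: "Zf a h (Suc j) = h" using j_ge1 by simp

lemma Zf_sj_mod: "Zf a h (Suc j mod p) = h"
proof (cases "Suc j = p")
  case True thus ?thesis using Zf_sj Zf_p by simp
next
  case False thus ?thesis using Zf_sj j_lt by simp
qed

lemma Zf_step: "t \<noteq> 0 \<Longrightarrow> t \<noteq> j \<Longrightarrow> Zf a h (Suc t) = Tl t (Zf a h t)" by simp

lemma Zf_j: "Zf a h j = F a" unfolding F_def ..

lemma y_1: "y 1 = fst w0" unfolding y_def using Yo_1[OF B_Tbar[OF w0]] .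

lemma y_1_max: "t mod p \<noteq> 1 \<Longrightarrow> y t < y 1"
  using B_w1_gt[OF w0] y_1 y_def by simp

lemma lapc_w: "lapc t a \<Longrightarrow> lapw t a"
  unfolding lapc_def lapw_def by (auto split: if_splits)

lemma genuine:
  assumes ha: "h \<le> a" "a \<le> 1" "a1 \<le> a" "a \<le> a2" and lw: "\<forall>t. 1 \<le> t \<and> t < p \<and> t \<noteq> j \<longrightarrow> lapw t a"
    and t: "t < p"
  shows "saw (a,h) (Zf a h t) = Zf a h (Suc t)"
proof -
  have T: "(a,h) \<in> Tbar" using ha h_pos Tbar_iff by simp
  show ?thesis
  proof (cases "t = 0")
    case True thus ?thesis using saw_13[OF T] by simp
  next
    case t0: False
    show ?thesis
    proof (cases "t = j")
      case True
      have "(2-h)/3 \<le> F a \<and> F a \<le> (2+h)/3" using I_iff ha by simp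
      hence "saw (a,h) (F a) = h" using ev_h[OF ha(1) h_pos h_lt1] by simp
      thus ?thesis using True Zf_j Zf_sj by simp
    next
      case tj: False
      have l: "lapw t a" using lw t t0 tj by simp
      have st: "Zf a h (Suc t) = Tl t (Zf a h t)" using Zf_step t0 tj by simp
      show ?thesis
      proof (cases "y t < 1/3")
        case True
        hence "Zf a h t \<le> a/3" using l unfolding lapw_def by simp
        thus ?thesis using ev_L[of "Zf a h t" a h] ha st True Tl_def by simp
      next
        case nL: False
        show ?thesis
        proof (cases "y t < y j")
          case True
          hence "(2-a)/3 \<le> Zf a h t" "Zf a h t \<le> (2-h)/3" using l nL unfolding lapw_def by auto
          thus ?thesis using ev_M[of a "Zf a h t" h h] ha st True nL Tl_def h_pos by simp
        next
          case False
          hence "(2+h)/3 \<le> Zf a h t" using l nL unfolding lapw_def by auto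
          thus ?thesis using ev_R[of h "Zf a h t" h a] st False nL Tl_def h_pos by simp
        qed
      qed
    qed
  qed
qed

lemma orbit_Z:
  assumes ha: "h \<le> a" "a \<le> 1" "a1 \<le> a" "a \<le> a2" and lw: "\<forall>t. 1 \<le> t \<and> t < p \<and> t \<noteq> j \<longrightarrow> lapw t a"
  shows "t \<le> p \<Longrightarrow> Yo (a,h) t = Zf a h t"
proof (induction t)
  case 0 thus ?case by simp
next
  case (Suc t) thus ?case using genuine[OF ha lw, of t] Yo_Suc by simp
qed

lemma claimA: assumes g: "good a" shows "(a, h) \<in> B"
proof -
  have ha: "a1 \<le> a" "a \<le> a2" "a < 1" and pat: "\<forall>s<p. \<forall>t<p. y s < y t \<longrightarrow> Zf a h s < Zf a h t"
    and lc: "\<forall>t. 1 \<le> t \<and> t < p \<and> t \<noteq> j \<longrightarrow> lapc t a" using g unfolding good_def by auto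
  have lw: "\<forall>t. 1 \<le> t \<and> t < p \<and> t \<noteq> j \<longrightarrow> lapw t a" using lc lapc_w by blast
  have p0: "0 < p" using p2 by simp
  have "y (Suc j mod p) < y 1" using y_1_max[of "Suc j mod p"] sucj_mod by simp
  moreover have "Suc j mod p < p" "(1::nat) < p" using p0 p2 by auto
  ultimately have "Zf a h (Suc j mod p) < Zf a h 1" using pat by blast
  hence hl: "h < a" using Zf_sj_mod by simp
  have T: "(a,h) \<in> Tbar" using ha hl h_pos Tbar_iff by simp
  have oz: "t \<le> p \<Longrightarrow> Yo (a,h) t = Zf a h t" for t using orbit_Z[OF _ _ ha(1,2) lw] hl ha by simp
  have per: "(saw (a,h) ^^ p) (1/3) = 1/3" using oz[of p] Zf_p Yo_def by simp
  have pat2: "\<forall>s<p. \<forall>t<p. ((saw w0 ^^ s) (1/3) < (saw w0 ^^ t) (1/3)) = ((saw (a,h) ^^ s) (1/3) < (saw (a,h) ^^ t) (1/3))"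
  proof (intro allI impI)
    fix s t assume st: "s < p" "t < p"
    have "(y s < y t) = (Zf a h s < Zf a h t)"
    proof
      assume "y s < y t" thus "Zf a h s < Zf a h t" using pat st by blast
    next
      assume z: "Zf a h s < Zf a h t"
      show "y s < y t"
      proof (rule ccontr)
        assume "\<not> y s < y t"
        hence "y t < y s \<or> y t = y s" by auto
        thus False
        proof
          assume "y t < y s" thus False using pat st z by fastforce
        next
          assume "y t = y s"
          hence "t = s" using y_eq_iff st by simp
          thus False using z by simp
        qed
      qed
    qed
    thus "((saw w0 ^^ s) (1/3) < (saw w0 ^^ t) (1/3)) = ((saw (a,h) ^^ s) (1/3) < (saw (a,h) ^^ t) (1/3))"
      using oz st unfolding y_def Yo_def by simp
  qed
  have "periodic_order_type (saw (a,h)) (1/3) p \<sigma>"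
    by (rule pot_transfer[OF B_pot[OF w0] sig per pat2])
  thus ?thesis using T unfolding bone_minus_def by simp
qed

lemma B_I: assumes w: "w \<in> B" shows "a1 \<le> fst w \<and> fst w \<le> a2"
proof -
  from B_shape[OF w] show ?thesis
  proof
    assume "snd w = h \<and> (2-h)/3 \<le> F (fst w) \<and> F (fst w) \<le> (2+h)/3"
    thus ?thesis using I_iff by blast
  next
    assume "(F (fst w) = (2-h)/3 \<or> F (fst w) = (2+h)/3) \<and> 0 \<le> snd w \<and> snd w \<le> h"
    hence "fst w = a1 \<or> fst w = a2" using ends_iff by blast
    thus ?thesis using a12 by auto
  qed
qed

lemma claimB: assumes w: "(a, h) \<in> B" shows "good a"
proof -
  have ha: "a1 \<le> a" "a \<le> a2" using B_I[OF w] by auto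
  have a1: "a < 1" using B_w1_lt1[OF w] by simp
  have oz: "t \<le> p \<Longrightarrow> Yo (a,h) t = Zf a h t" for t using B_Z[OF w] by simp
  have pat: "\<forall>s<p. \<forall>t<p. y s < y t \<longrightarrow> Zf a h s < Zf a h t"
    using pat0[OF w] oz by simp
  have lc: "lapc t a" if t: "1 \<le> t" "t < p" "t \<noteq> j" for t
  proof -
    have n0: "y t \<noteq> 1/3" using y_eq_iff[of t 0] t y_def by auto
    have nj: "y t \<noteq> y j" using y_eq_iff[of t j] t j_lt by auto
    have x: "Yo (a,h) t = Zf a h t" using oz t by simp
    have gtS: "y t > 1/3 \<Longrightarrow> saw (a,h) (Yo (a,h) t) > h" using B_succ_gt[OF w t(1,2) _ t(3)] B_h[OF w] Yo_Suc by simp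
    show ?thesis
    proof (cases "y t < 1/3")
      case True thus ?thesis using lapL[OF w t(1,2) True] x unfolding lapc_def by simp
    next
      case False
      hence g: "y t > 1/3" using n0 by simp
      show ?thesis
      proof (cases "y t < y j")
        case True thus ?thesis using lapM[OF w t(1,2) g True] x gtS g False unfolding lapc_def by simp
      next
        case False2: False
        hence "y t > y j" using nj by simp
        thus ?thesis using lapR[OF w t(1,2)] x gtS g False False2 unfolding lapc_def by simp
      qed
    qed
  qed
  show ?thesis unfolding good_def using ha a1 pat lc by blast
qed

end


lemma ev_M2: assumes "h \<le> s" "s \<le> 1" "0 \<le> h" shows "saw (s,h) ((2-s)/3) = s"
proof (cases "s = 1")
  case True thus ?thesis unfolding saw_def by simp
next
  case False
  hence "(2-s)/3 > 1/3" "(2-s)/3 \<le> 2/3" "2 - 3*((2-s)/3) = s" using assms by (auto simp: field_simps)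
  thus ?thesis using assms unfolding saw_def by (simp add: min_def max_def)
qed

lemma lim_le:
  fixes f g :: "real \<Rightarrow> real"
  assumes s: "s islimpt G" and f: "continuous_on UNIV f" and g: "continuous_on UNIV g"
    and fg: "\<forall>x\<in>G. f x < g x"
  shows "f s \<le> g s"
proof (rule ccontr)
  assume "\<not> f s \<le> g s"
  hence sT: "s \<in> {x. g x < f x}" by simp
  have oT: "open {x. g x < f x}" using open_Collect_less[OF g f] .
  obtain x where "x \<in> G" "x \<in> {x. g x < f x}" using islimptE[OF s sT oT] by metis
  thus False using fg by force
qed

context bm0 begin

lemma cont_Zf: "continuous_on UNIV (\<lambda>a. Zf a h t)" using Zf_cont .

lemma open_lapc: "open {a. lapc t a}"
proof -
  have c: "continuous_on UNIV (\<lambda>a::real. a/3)" "continuous_on UNIV (\<lambda>a::real. (2-a)/3)"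
    "continuous_on UNIV (\<lambda>a::real. (2-h)/3)" "continuous_on UNIV (\<lambda>a::real. (2+h)/3)"
    by (auto intro!: continuous_intros)
  show ?thesis
  proof (cases "y t < 1/3")
    case True thus ?thesis unfolding lapc_def using open_Collect_less[OF cont_Zf c(1)] by simp
  next
    case False
    show ?thesis
    proof (cases "y t < y j")
      case True thus ?thesis unfolding lapc_def using False
        open_Collect_conj[OF open_Collect_less[OF c(2) cont_Zf] open_Collect_less[OF cont_Zf c(3)]] by simp
    next
      case False2: False
      thus ?thesis unfolding lapc_def using False open_Collect_less[OF c(4) cont_Zf] by simp
    qed
  qed
qed

definition Oset where "Oset = {a. a < 1} \<inter> (\<Inter>s\<in>{..<p}. \<Inter>t\<in>{..<p}. {a. y s < y t \<longrightarrow> Zf a h s < Zf a h t})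
   \<inter> (\<Inter>t\<in>{t. 1 \<le> t \<and> t < p \<and> t \<noteq> j}. {a. lapc t a})"

lemma open_O: "open Oset"
proof -
  have o1: "open {a::real. a < 1}" using open_Collect_less[of "\<lambda>a. a" "\<lambda>a. 1"] by (simp add: continuous_on_id)
  have o2: "open {a. y s < y t \<longrightarrow> Zf a h s < Zf a h t}" for s t
    by (cases "y s < y t") (simp_all add: open_Collect_less[OF cont_Zf cont_Zf])
  have fin: "finite {t. 1 \<le> t \<and> t < p \<and> t \<noteq> j}" by (rule finite_subset[of _ "{..<p}"]) auto
  show ?thesis unfolding Oset_def
    by (intro open_Int o1 open_INT ballI o2 open_lapc fin) auto
qed

lemma good_eq: "{a. good a} = {a1..a2} \<inter> Oset"
  unfolding good_def Oset_def by auto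

lemma good_h: "good a \<Longrightarrow> h < a" using claimA h_lt by fastforce

lemma good_closed: assumes sI: "s \<in> {a1..a2}" and sl: "s islimpt {a. good a}" shows "good s"
proof -
  let ?G = "{a. good a}"
  have idc: "continuous_on UNIV (\<lambda>a::real. a)" by (simp add: continuous_on_id)
  have cc: "continuous_on UNIV (\<lambda>a::real. c)" for c by simp
  have c: "continuous_on UNIV (\<lambda>a::real. a/3)" "continuous_on UNIV (\<lambda>a::real. (2-a)/3)"
    by (auto intro!: continuous_intros)
  have sa: "a1 \<le> s" "s \<le> a2" using sI by auto
  have s1: "s \<le> 1" using lim_le[OF sl idc cc[of 1]] unfolding good_def by auto
  have patw: "Zf s h s' \<le> Zf s h t'" if "s' < p" "t' < p" "y s' < y t'" for s' t'
    using lim_le[OF sl cont_Zf cont_Zf, of s' t'] that unfolding good_def by auto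
  have lw: "lapw t s" if t: "1 \<le> t" "t < p" "t \<noteq> j" for t
  proof -
    have lc: "\<forall>x\<in>?G. lapc t x" using t unfolding good_def by auto
    show ?thesis
    proof (cases "y t < 1/3")
      case True thus ?thesis using lim_le[OF sl cont_Zf c(1), of t] lc unfolding lapw_def lapc_def by auto
    next
      case False
      show ?thesis
      proof (cases "y t < y j")
        case True thus ?thesis using False lim_le[OF sl c(2) cont_Zf, of t] lim_le[OF sl cont_Zf cc, of t "(2-h)/3"] lc
          unfolding lapw_def lapc_def by auto
      next
        case False2: False
        thus ?thesis using False lim_le[OF sl cc cont_Zf, of "(2+h)/3" t] lc unfolding lapw_def lapc_def by auto
      qed
    qed
  qed
  have lwa: "\<forall>t. 1 \<le> t \<and> t < p \<and> t \<noteq> j \<longrightarrow> lapw t s" using lw by blast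
  have p0: "0 < p" using p2 by simp
  have "y (Suc j mod p) < y 1" using y_1_max[of "Suc j mod p"] sucj_mod by simp
  moreover have "Suc j mod p < p" "(1::nat) < p" using p0 p2 by auto
  ultimately have "Zf s h (Suc j mod p) \<le> Zf s h 1" using patw[of "Suc j mod p" 1] by simp
  hence hs: "h \<le> s" using Zf_sj_mod by simp
  have oz: "t \<le> p \<Longrightarrow> Yo (s,h) t = Zf s h t" for t using orbit_Z[OF hs s1 sa lwa] .
  have gen: "t < p \<Longrightarrow> saw (s,h) (Zf s h t) = Zf s h (Suc t)" for t using genuine[OF hs s1 sa lwa] .
  have slt1: "s < 1"
  proof (rule ccontr)
    assume "\<not> s < 1"
    hence "Yo (s,h) 1 \<ge> 1" using oz[of 1] p2 by simp
    hence "(saw (s,h) ^^ (p - 1)) (Yo (s,h) 1) \<ge> 1" using saw_ge1_iter by blast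
    moreover have "(saw (s,h) ^^ (p - 1)) (Yo (s,h) 1) = Yo (s,h) (p - 1 + 1)" unfolding Yo_def by (simp only: funpow_add comp_apply)
    ultimately have "Yo (s,h) p \<ge> 1" using p2 by simp
    thus False using oz[of p] Zf_p by simp
  qed
  have dist: "a' = b'" if ab: "a' < p" "b' < p" "Zf s h a' = Zf s h b'" for a' b'
  proof -
    have main: "a' = b'" if ab: "a' < b'" "b' < p" "Zf s h a' = Zf s h b'" for a' b'
    proof (rule ccontr)
      assume "a' \<noteq> b'"
      define c where "c = a' + (p - b')"
      have ya: "Yo (s,h) a' = Yo (s,h) b'" using ab oz[of a'] oz[of b'] by simp
      have shift: "Yo (s,h) (k + a') = Yo (s,h) (k + b')" for k
      proof -
        have "Yo (s,h) (k + a') = (saw (s,h)^^k) (Yo (s,h) a')" unfolding Yo_def by (simp only: funpow_add comp_apply)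
        also have "\<dots> = (saw (s,h)^^k) (Yo (s,h) b')" using ya by simp
        also have "\<dots> = Yo (s,h) (k + b')" unfolding Yo_def by (simp only: funpow_add comp_apply)
        finally show ?thesis .
      qed
      have e1: "p - b' + a' = c" "p - b' + b' = p" using ab unfolding c_def by auto
      have "Yo (s,h) c = Yo (s,h) p" using shift[of "p - b'"] unfolding e1 .
      moreover have "c \<le> p" using ab unfolding c_def by auto
      ultimately have zc: "Zf s h c = 1/3" using oz[of c] oz[of p] Zf_p by simp
      have c1: "1 \<le> c" "c < p" using ab unfolding c_def by auto
      show False
      proof (cases "j < c")
        case True
        have "Zf s h c = Zf (fst w0) h c" using Zf_tail[OF True] by blast
        also have "\<dots> = y c" using B_Z[OF w0, of c] c1 y_def by simp
        finally have "y c = y 0" using zc y_def by simp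
        thus False using y_eq_iff[of c 0] c1 by simp
      next
        case False
        show False
        proof (cases "c = j")
          case True
          have "(2-h)/3 \<le> F s" using I_iff sa by blast
          thus False using zc True Zf_j h_lt1 by simp
        next
          case False2: False
          hence cj: "c < j" using False by simp
          have sT: "s \<in> {x. x/3 < Zf x h c \<and> Zf x h c < (2-x)/3}" using zc slt1 by simp
          have oT: "open {x. x/3 < Zf x h c \<and> Zf x h c < (2-x)/3}"
            using open_Collect_conj[OF open_Collect_less[OF c(1) cont_Zf] open_Collect_less[OF cont_Zf c(2)]] .
          from islimptE[OF sl sT oT] obtain x where xG: "x \<in> ?G" and xT: "x \<in> {x. x/3 < Zf x h c \<and> Zf x h c < (2-x)/3}" by blast
          have gx: "good x" using xG by simp
          have x1: "x/3 < Zf x h c" "Zf x h c < (2-x)/3" using xT by auto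
          have "\<forall>t. 1 \<le> t \<and> t < p \<and> t \<noteq> j \<longrightarrow> lapc t x" using gx unfolding good_def by blast
          hence lcx: "lapc c x" using c1 cj by simp
          have hx: "h < x" using good_h[OF gx] .
          show False
          proof (cases "y c < 1/3")
            case True thus False using lcx x1 unfolding lapc_def by simp
          next
            case False
            show False
            proof (cases "y c < y j")
              case True thus False using lcx x1 False unfolding lapc_def by simp
            next
              case False2: False
              hence "(2+h)/3 < Zf x h c" using lcx False unfolding lapc_def by simp
              thus False using x1 hx h_pos by simp
            qed
          qed
        qed
      qed
    qed
    show ?thesis
    proof (cases a' b' rule: linorder_cases)
      case less thus ?thesis using main[of a' b'] ab by blast
    next
      case equal thus ?thesis .
    next
      case greater thus ?thesis using main[of b' a'] ab by auto
    qed
  qed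
  have mod_eq: "Zf s h (Suc t mod p) = Zf s h (Suc t)" if "t < p" for t
  proof (cases "Suc t = p")
    case True thus ?thesis using Zf_p by simp
  next
    case False thus ?thesis using that by simp
  qed
  have coll: "t1 = t2" if "t1 < p" "t2 < p" "Zf s h (Suc t1) = Zf s h (Suc t2)" for t1 t2
  proof -
    have "Suc t1 mod p = Suc t2 mod p" using dist[of "Suc t1 mod p" "Suc t2 mod p"] mod_eq that p0 by simp
    thus ?thesis using suc_mod_inj that by blast
  qed
  have pat: "\<forall>s'<p. \<forall>t'<p. y s' < y t' \<longrightarrow> Zf s h s' < Zf s h t'"
  proof (intro allI impI)
    fix s' t' assume st: "s' < p" "t' < p" "y s' < y t'"
    hence "s' \<noteq> t'" by auto
    thus "Zf s h s' < Zf s h t'" using patw[OF st] dist[OF st(1,2)] by (auto simp: order.order_iff_strict)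
  qed
  have lc: "lapc t s" if t: "1 \<le> t" "t < p" "t \<noteq> j" for t
  proof -
    have l: "lapw t s" using lw[OF t] .
    have g: "saw (s,h) (Zf s h t) = Zf s h (Suc t)" using gen t by simp
    have z1: "Zf s h (Suc 0) = s" by simp
    show ?thesis
    proof (cases "y t < 1/3")
      case True
      hence le: "Zf s h t \<le> s/3" using l unfolding lapw_def by simp
      have "Zf s h t \<noteq> s/3"
      proof
        assume e: "Zf s h t = s/3"
        have "saw (s,h) (s/3) = s" using s1 unfolding saw_def by (simp add: min_def)
        hence "Zf s h (Suc t) = Zf s h (Suc 0)" using g e z1 by simp
        thus False using coll[of t 0] t p0 by simp
      qed
      thus ?thesis using le True unfolding lapc_def by simp
    next
      case nL: False
      show ?thesis
      proof (cases "y t < y j")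
        case True
        hence le: "(2-s)/3 \<le> Zf s h t" "Zf s h t \<le> (2-h)/3" using l nL unfolding lapw_def by auto
        have n1: "Zf s h t \<noteq> (2-s)/3"
        proof
          assume e: "Zf s h t = (2-s)/3"
          have "saw (s,h) ((2-s)/3) = s" using ev_M2[OF hs s1] h_pos by simp
          hence "Zf s h (Suc t) = Zf s h (Suc 0)" using g e z1 by simp
          thus False using coll[of t 0] t p0 by simp
        qed
        have n2: "Zf s h t \<noteq> (2-h)/3"
        proof
          assume e: "Zf s h t = (2-h)/3"
          have "saw (s,h) ((2-h)/3) = h" using ev_h[OF hs h_pos h_lt1] h_pos by simp
          hence "Zf s h (Suc t) = Zf s h (Suc j)" using g e Zf_sj by simp
          thus False using coll[of t j] t j_lt by simp
        qed
        show ?thesis using le n1 n2 nL True unfolding lapc_def by simp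
      next
        case False
        hence le: "(2+h)/3 \<le> Zf s h t" using l nL unfolding lapw_def by auto
        have n2: "Zf s h t \<noteq> (2+h)/3"
        proof
          assume e: "Zf s h t = (2+h)/3"
          have "saw (s,h) ((2+h)/3) = h" using ev_h[OF hs h_pos h_lt1] h_pos by simp
          hence "Zf s h (Suc t) = Zf s h (Suc j)" using g e Zf_sj by simp
          thus False using coll[of t j] t j_lt by simp
        qed
        show ?thesis using le n2 nL False unfolding lapc_def by simp
      qed
    qed
  qed
  show ?thesis unfolding good_def using sa slt1 pat lc by blast
qed

lemma good_ne: "\<exists>a. good a"
proof -
  have T: "w0 \<in> Tbar" using B_Tbar[OF w0] .
  from B_shape[OF w0] have "(fst w0, h) \<in> B"
  proof
    assume "snd w0 = h \<and> (2-h)/3 \<le> F (fst w0) \<and> F (fst w0) \<le> (2+h)/3"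
    thus ?thesis using w0 by (metis prod.collapse)
  next
    assume "(F (fst w0) = (2-h)/3 \<or> F (fst w0) = (2+h)/3) \<and> 0 \<le> snd w0 \<and> snd w0 \<le> h"
    thus ?thesis using vert[OF w0, of h] h_pos by simp
  qed
  thus ?thesis using claimB by blast
qed

lemma horiz: assumes "a1 \<le> a" "a \<le> a2" shows "(a, h) \<in> B"
proof -
  have "{a. good a} = {} \<or> {a. good a} = {a1..a2}"
  proof (rule connected_clopen[THEN iffD1, rule_format])
    show "connected {a1..a2}" by simp
    show "openin (top_of_set {a1..a2}) {a. good a} \<and> closedin (top_of_set {a1..a2}) {a. good a}"
    proof
      show "openin (top_of_set {a1..a2}) {a. good a}" unfolding good_eq using open_O by blast
      have "{a. good a} \<subseteq> {a1..a2}" unfolding good_def by auto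
      moreover have "\<forall>x. x islimpt {a. good a} \<and> x \<in> {a1..a2} \<longrightarrow> x \<in> {a. good a}"
        using good_closed by blast
      ultimately show "closedin (top_of_set {a1..a2}) {a. good a}"
        unfolding closedin_limpt by blast
    qed
  qed
  hence "{a. good a} = {a1..a2}" using good_ne by auto
  moreover have "a \<in> {a1..a2}" using assms by simp
  ultimately have "good a" by blast
  thus ?thesis using claimA by blast
qed

lemma B_eq: "B = {w. (fst w = a1 \<or> fst w = a2) \<and> 0 \<le> snd w \<and> snd w \<le> h} \<union> {w. a1 \<le> fst w \<and> fst w \<le> a2 \<and> snd w = h}"
proof
  show "B \<subseteq> {w. (fst w = a1 \<or> fst w = a2) \<and> 0 \<le> snd w \<and> snd w \<le> h} \<union> {w. a1 \<le> fst w \<and> fst w \<le> a2 \<and> snd w = h}"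
  proof
    fix w assume w: "w \<in> B"
    from B_shape[OF w] show "w \<in> {w. (fst w = a1 \<or> fst w = a2) \<and> 0 \<le> snd w \<and> snd w \<le> h} \<union> {w. a1 \<le> fst w \<and> fst w \<le> a2 \<and> snd w = h}"
      using I_iff ends_iff by auto
  qed
  show "{w. (fst w = a1 \<or> fst w = a2) \<and> 0 \<le> snd w \<and> snd w \<le> h} \<union> {w. a1 \<le> fst w \<and> fst w \<le> a2 \<and> snd w = h} \<subseteq> B"
  proof
    fix w assume "w \<in> {w. (fst w = a1 \<or> fst w = a2) \<and> 0 \<le> snd w \<and> snd w \<le> h} \<union> {w. a1 \<le> fst w \<and> fst w \<le> a2 \<and> snd w = h}"
    thus "w \<in> B"
    proof
      assume "w \<in> {w. a1 \<le> fst w \<and> fst w \<le> a2 \<and> snd w = h}"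
      thus ?thesis using horiz by (metis (mono_tags, lifting) mem_Collect_eq prod.collapse)
    next
      assume H: "w \<in> {w. (fst w = a1 \<or> fst w = a2) \<and> 0 \<le> snd w \<and> snd w \<le> h}"
      hence "(fst w, h) \<in> B" using horiz a12 by auto
      moreover have "F (fst (fst w, h)) = (2-h)/3 \<or> F (fst (fst w, h)) = (2+h)/3" using ends_iff H by auto
      ultimately have "(fst w, snd w) \<in> B" using vert[of "(fst w, h)" "snd w"] H by auto
      thus ?thesis by simp
    qed
  qed
qed

end


definition Ush :: "real \<Rightarrow> real \<Rightarrow> real \<Rightarrow> (real \<times> real) set" where
  "Ush a1 a2 h = {w. (fst w = a1 \<or> fst w = a2) \<and> 0 \<le> snd w \<and> snd w \<le> h} \<union> {w. a1 \<le> fst w \<and> fst w \<le> a2 \<and> snd w = h}"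

context bm0 begin

lemma B_snd_h: "w \<in> B \<Longrightarrow> snd w = h \<Longrightarrow> snd w \<in> range (Yo w)"
  using B_h by (metis rangeI)

lemma B_23: assumes w: "w \<in> B" and r: "2/3 \<in> range (Yo w)"
  shows "snd w = h \<and> a1 < fst w \<and> fst w < a2"
proof -
  have T: "w \<in> Tbar" using B_Tbar[OF w] .
  obtain t0 where "Yo w t0 = 2/3" using r by auto
  hence yt: "Yo w (t0 mod p) = 2/3" using B_mod[OF w, of t0] by simp
  define t where "t = t0 mod p"
  have tp: "t < p" using p2 t_def by simp
  have t0: "t \<noteq> 0"
  proof
    assume "t = 0"
    hence "Yo w t = 1/3" by simp
    thus False using yt t_def by simp
  qed
  have "t = j"
  proof (rule ccontr)
    assume tj: "t \<noteq> j"
    have "y t > 1/3" using pat0[OF w, of 0 t] yt t_def y_def by simp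
    hence "Yo w (Suc t) > Yo w (Suc j)" using B_succ_gt[OF w _ tp _ tj] t0 by simp
    moreover have "Yo w (Suc t) = snd w" unfolding Yo_Suc t_def yt using saw_23[OF T] .
    moreover have "Yo w (Suc j) \<ge> snd w" using Yo_Suc saw_ge_w2[OF T] lap_j[OF w] by (metis less_imp_le)
    ultimately show False by simp
  qed
  hence F23: "F (fst w) = 2/3" using B_F[OF w] yt t_def by simp
  have "(2-h)/3 \<noteq> 2/3" "(2+h)/3 \<noteq> 2/3" using h_pos by auto
  hence sh: "snd w = h" using B_shape[OF w] F23 by auto
  have "(2-h)/3 < F (fst w) \<and> F (fst w) < (2+h)/3" using F23 h_pos by simp
  thus ?thesis using I_strict_iff sh by blast
qed

lemma B_ex23: "\<exists>w\<in>B. 2/3 \<in> range (Yo w)"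
proof -
  define a where "a = (2/3 - snd Fa) / fst Fa"
  have Fa: "F a = 2/3" using Fa_props unfolding a_def by (simp add: field_simps)
  hence "(2-h)/3 \<le> F a \<and> F a \<le> (2+h)/3" using h_pos by simp
  hence "a1 \<le> a \<and> a \<le> a2" using I_iff by blast
  hence w: "(a, h) \<in> B" using horiz by blast
  have "Yo (a,h) j = 2/3" using B_F[OF w] Fa by simp
  thus ?thesis using w by (metis rangeI)
qed

lemma struct: "\<exists>a1 a2 h. 0 < h \<and> h < a1 \<and> a1 < a2 \<and> a2 < 1 \<and> B = Ush a1 a2 h \<and>
    (\<forall>w\<in>B. snd w = h \<longrightarrow> snd w \<in> range (Yo w)) \<and>
    (\<forall>w\<in>B. 2/3 \<in> range (Yo w) \<longrightarrow> snd w = h \<and> a1 < fst w \<and> fst w < a2) \<and>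
    (\<exists>w\<in>B. 2/3 \<in> range (Yo w))"
proof (intro exI conjI)
  show "0 < h" using h_pos .
  have "(a1, h) \<in> B" using horiz a12 by simp
  thus "h < a1" using h_lt by fastforce
  show "a1 < a2" using a12 .
  have "(a2, h) \<in> B" using horiz a12 by simp
  thus "a2 < 1" using B_w1_lt1 by fastforce
  show "B = Ush a1 a2 h" unfolding Ush_def using B_eq .
  show "\<forall>w\<in>B. snd w = h \<longrightarrow> snd w \<in> range (Yo w)" using B_snd_h by blast
  show "\<forall>w\<in>B. 2/3 \<in> range (Yo w) \<longrightarrow> snd w = h \<and> a1 < fst w \<and> fst w < a2" using B_23 by blast
  show "\<exists>w\<in>B. 2/3 \<in> range (Yo w)" using B_ex23 .
qed

end

lemma bone_minus_struct:
  assumes p: "p \<ge> 2" and sig: "\<forall>i\<in>{1..p}. \<sigma> i \<in> {1..p}" and ne: "bone_minus p \<sigma> \<noteq> {}"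
  shows "\<exists>a1 a2 h. 0 < h \<and> h < a1 \<and> a1 < a2 \<and> a2 < 1 \<and> bone_minus p \<sigma> = Ush a1 a2 h \<and>
    (\<forall>w\<in>bone_minus p \<sigma>. snd w = h \<longrightarrow> snd w \<in> range (Yo w)) \<and>
    (\<forall>w\<in>bone_minus p \<sigma>. 2/3 \<in> range (Yo w) \<longrightarrow> snd w = h \<and> a1 < fst w \<and> fst w < a2) \<and>
    (\<exists>w\<in>bone_minus p \<sigma>. 2/3 \<in> range (Yo w))"
proof -
  obtain w0 where "w0 \<in> bone_minus p \<sigma>" using ne by blast
  then interpret bm0 p \<sigma> w0 using p sig by unfold_locales auto
  show ?thesis using struct .
qed



definition rflx :: "real \<times> real \<Rightarrow> real \<times> real" where
  "rflx w = (1 - snd w, 1 - fst w)"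

lemma rflx_rflx[simp]: "rflx (rflx w) = w" by (simp add: rflx_def)

lemma rflx_Tbar: "w \<in> Tbar \<Longrightarrow> rflx w \<in> Tbar" by (simp add: rflx_def Tbar_iff)

lemma saw_refl: assumes "w \<in> Tbar" shows "saw (rflx w) (1 - x) = 1 - saw w x"
proof -
  obtain a b where w: "w = (a,b)" by (cases w)
  have ab: "b \<le> a" "a \<le> 1" "0 \<le> b" using assms w Tbar_iff by auto
  show ?thesis
  proof (cases "x < 1/3")
    case True thus ?thesis using ab unfolding w rflx_def saw_def by (auto simp: min_def max_def)
  next
    case False
    show ?thesis
    proof (cases "x = 1/3")
      case True thus ?thesis using ab unfolding w rflx_def saw_def by (auto simp: min_def max_def)
    next
      case False2: False
      show ?thesis
      proof (cases "x < 2/3")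
        case True thus ?thesis using ab False False2 unfolding w rflx_def saw_def by (auto simp: min_def max_def)
      next
        case False3: False
        show ?thesis
        proof (cases "x = 2/3")
          case True thus ?thesis using ab unfolding w rflx_def saw_def by (auto simp: min_def max_def)
        next
          case False4: False
          thus ?thesis using ab False3 unfolding w rflx_def saw_def by (auto simp: min_def max_def)
        qed
      qed
    qed
  qed
qed

lemma orbit_refl: assumes "w \<in> Tbar" shows "(saw (rflx w) ^^ k) (1 - x) = 1 - (saw w ^^ k) x"
  by (induction k) (simp_all add: saw_refl[OF assms, symmetric])

definition rev_perm :: "nat \<Rightarrow> (nat \<Rightarrow> nat) \<Rightarrow> nat \<Rightarrow> nat" where
  "rev_perm p \<sigma> i = p + 1 - \<sigma> (p + 1 - i)"

lemma rev_perm_sig: "\<forall>i\<in>{1..p}. \<sigma> i \<in> {1..p} \<Longrightarrow> \<forall>i\<in>{1..p}. rev_perm p \<sigma> i \<in> {1..p}"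
proof
  fix i assume A: "\<forall>i\<in>{1..p}. \<sigma> i \<in> {1..p}" and i: "i \<in> {1..p}"
  have "p + 1 - i \<in> {1..p}" using i by auto
  hence "\<sigma> (p + 1 - i) \<in> {1..p}" using A by blast
  thus "rev_perm p \<sigma> i \<in> {1..p}" unfolding rev_perm_def by auto
qed

lemma rk_refl:
  assumes inj: "inj_on y {..<p}" and t: "t < p"
  shows "rk (\<lambda>k. 1 - y k) p t = p - 1 - rk y p t"
proof -
  have "{..<p} = {s. s < p \<and> y s < y t} \<union> {t} \<union> {s. s < p \<and> y t < y s}"
  proof
    show "{..<p} \<subseteq> {s. s < p \<and> y s < y t} \<union> {t} \<union> {s. s < p \<and> y t < y s}"
    proof
      fix s assume s: "s \<in> {..<p}"
      show "s \<in> {s. s < p \<and> y s < y t} \<union> {t} \<union> {s. s < p \<and> y t < y s}"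
      proof (cases "s = t")
        case True thus ?thesis by simp
      next
        case False
        hence "y s \<noteq> y t" using inj s t by (auto simp: inj_on_def)
        thus ?thesis using s by (auto simp: neq_iff)
      qed
    qed
    show "{s. s < p \<and> y s < y t} \<union> {t} \<union> {s. s < p \<and> y t < y s} \<subseteq> {..<p}" using t by auto
  qed
  hence "card {..<p} = card ({s. s < p \<and> y s < y t} \<union> {t} \<union> {s. s < p \<and> y t < y s})" by simp
  also have "\<dots> = card {s. s < p \<and> y s < y t} + card {t} + card {s. s < p \<and> y t < y s}"
    by (subst card_Un_disjoint; auto)+
  finally have "p = rk y p t + 1 + card {s. s < p \<and> y t < y s}" unfolding rk_def by simp
  moreover have "rk (\<lambda>k. 1 - y k) p t = card {s. s < p \<and> y t < y s}" unfolding rk_def by simp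
  ultimately show ?thesis by simp
qed

lemma pot_refl:
  fixes g g' :: "real \<Rightarrow> real"
  assumes rel: "\<And>k. (g'^^k) x' = 1 - (g^^k) x" and sig: "\<forall>i\<in>{1..p}. \<sigma> i \<in> {1..p}"
    and pot: "periodic_order_type g x p \<sigma>"
  shows "periodic_order_type g' x' p (rev_perm p \<sigma>)"
proof -
  note b = pot_basic[OF pot]
  have x': "x' = 1 - x" using rel[of 0] by simp
  have per: "(g'^^p) x' = x'" using rel[of p] b(2) x' by simp
  have ex: "\<forall>k\<in>{1..<p}. (g'^^k) x' \<noteq> x'" using rel b(3) x' by auto
  define y where "y = (\<lambda>k. (g^^k) x)"
  have inj: "inj_on y {..<p}" unfolding y_def using orbit_inj[OF b(2) b(3)] .
  have y': "(\<lambda>k. (g'^^k) x') = (\<lambda>k. 1 - y k)" using rel y_def by auto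
  have C: "\<forall>t<p. \<sigma> (rk y p t + 1) = rk y p (Suc t mod p) + 1"
    using pot_char[OF b sig] pot unfolding y_def by blast
  have "\<forall>t<p. rev_perm p \<sigma> (rk (\<lambda>k. 1 - y k) p t + 1) = rk (\<lambda>k. 1 - y k) p (Suc t mod p) + 1"
  proof (intro allI impI)
    fix t assume t: "t < p"
    have m: "Suc t mod p < p" using b(1) by simp
    have r1: "rk y p t < p" "rk y p (Suc t mod p) < p" using rk_lt t m by auto
    have "\<sigma> (rk y p t + 1) = rk y p (Suc t mod p) + 1" using C t by blast
    moreover have "p + 1 - (p - 1 - rk y p t + 1) = rk y p t + 1" using r1 by simp
    ultimately show "rev_perm p \<sigma> (rk (\<lambda>k. 1 - y k) p t + 1) = rk (\<lambda>k. 1 - y k) p (Suc t mod p) + 1"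
      unfolding rev_perm_def rk_refl[OF inj t] rk_refl[OF inj m] using r1 by simp
  qed
  thus ?thesis using pot_char[OF b(1) per ex rev_perm_sig[OF sig]] y' by simp
qed

lemma rev_perm_rev: "\<forall>i\<in>{1..p}. \<sigma> i \<in> {1..p} \<Longrightarrow> i \<in> {1..p} \<Longrightarrow> rev_perm p (rev_perm p \<sigma>) i = \<sigma> i"
  unfolding rev_perm_def by force

lemma pot_cong: "(\<forall>i\<in>{1..p}. \<sigma> i = \<tau> i) \<Longrightarrow> periodic_order_type g x p \<sigma> = periodic_order_type g x p \<tau>"
proof -
  assume H: "\<forall>i\<in>{1..p}. \<sigma> i = \<tau> i"
  show ?thesis unfolding periodic_order_type_def Let_def using H by auto
qed

lemma bone_plus_refl:
  assumes sig: "\<forall>i\<in>{1..p}. \<sigma> i \<in> {1..p}"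
  shows "w \<in> bone_plus p \<sigma> \<longleftrightarrow> rflx w \<in> bone_minus p (rev_perm p \<sigma>)"
proof
  assume w: "w \<in> bone_plus p \<sigma>"
  hence T: "w \<in> Tbar" and pot: "periodic_order_type (saw w) (2/3) p \<sigma>" by (auto simp: bone_plus_def)
  have rel: "(saw (rflx w) ^^ k) (1/3) = 1 - (saw w ^^ k) (2/3)" for k
    using orbit_refl[OF T, of k "2/3"] by simp
  show "rflx w \<in> bone_minus p (rev_perm p \<sigma>)"
    using pot_refl[OF rel sig pot] rflx_Tbar[OF T] by (simp add: bone_minus_def)
next
  assume w: "rflx w \<in> bone_minus p (rev_perm p \<sigma>)"
  hence T: "rflx w \<in> Tbar" and pot: "periodic_order_type (saw (rflx w)) (1/3) p (rev_perm p \<sigma>)" by (auto simp: bone_minus_def)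
  have rel: "(saw w ^^ k) (2/3) = 1 - (saw (rflx w) ^^ k) (1/3)" for k
    using orbit_refl[OF T, of k "1/3"] by simp
  have "periodic_order_type (saw w) (2/3) p (rev_perm p (rev_perm p \<sigma>))"
    using pot_refl[OF rel rev_perm_sig[OF sig] pot] .
  hence "periodic_order_type (saw w) (2/3) p \<sigma>" using pot_cong[of p "rev_perm p (rev_perm p \<sigma>)" \<sigma>] rev_perm_rev[OF sig] by blast
  moreover have "w \<in> Tbar" using rflx_Tbar[OF T] by simp
  ultimately show "w \<in> bone_plus p \<sigma>" by (simp add: bone_plus_def)
qed



definition Csh :: "real \<Rightarrow> real \<Rightarrow> real \<Rightarrow> (real \<times> real) set" where
  "Csh b h1 h2 = {w. (snd w = h1 \<or> snd w = h2) \<and> b \<le> fst w \<and> fst w \<le> 1} \<union> {w. fst w = b \<and> h1 \<le> snd w \<and> snd w \<le> h2}"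

lemma orbit_refl23: "w \<in> Tbar \<Longrightarrow> Yo (rflx w) k = 1 - (saw w ^^ k) (2/3)"
  using orbit_refl[of w k "2/3"] unfolding Yo_def by simp

lemma bone_plus_struct:
  assumes p: "p \<ge> 2" and sig: "\<forall>i\<in>{1..p}. \<sigma> i \<in> {1..p}" and ne: "bone_plus p \<sigma> \<noteq> {}"
  shows "\<exists>b h1 h2. 0 < h1 \<and> h1 < h2 \<and> h2 < b \<and> b < 1 \<and> bone_plus p \<sigma> = Csh b h1 h2 \<and>
    (\<forall>w\<in>bone_plus p \<sigma>. fst w = b \<longrightarrow> fst w \<in> range (\<lambda>k. (saw w ^^ k) (2/3))) \<and>
    (\<forall>w\<in>bone_plus p \<sigma>. 1/3 \<in> range (\<lambda>k. (saw w ^^ k) (2/3)) \<longrightarrow> fst w = b \<and> h1 < snd w \<and> snd w < h2)"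
proof -
  let ?s = "rev_perm p \<sigma>"
  have sig': "\<forall>i\<in>{1..p}. ?s i \<in> {1..p}" using rev_perm_sig[OF sig] .
  have iff: "w \<in> bone_plus p \<sigma> \<longleftrightarrow> rflx w \<in> bone_minus p ?s" for w using bone_plus_refl[OF sig] .
  obtain w0 where "w0 \<in> bone_plus p \<sigma>" using ne by blast
  hence "bone_minus p ?s \<noteq> {}" using iff by blast
  from bone_minus_struct[OF p sig' this] obtain a1 a2 h where
    st: "0 < h" "h < a1" "a1 < a2" "a2 < 1" "bone_minus p ?s = Ush a1 a2 h"
      "\<forall>w\<in>bone_minus p ?s. snd w = h \<longrightarrow> snd w \<in> range (Yo w)"
      "\<forall>w\<in>bone_minus p ?s. 2/3 \<in> range (Yo w) \<longrightarrow> snd w = h \<and> a1 < fst w \<and> fst w < a2"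
    by blast
  have TB: "w \<in> bone_plus p \<sigma> \<Longrightarrow> w \<in> Tbar" for w by (simp add: bone_plus_def)
  show ?thesis
  proof (intro exI conjI)
    show "0 < 1 - a2" "1 - a2 < 1 - a1" "1 - a1 < 1 - h" "1 - h < 1" using st by auto
    show "bone_plus p \<sigma> = Csh (1 - h) (1 - a2) (1 - a1)"
    proof
      show "bone_plus p \<sigma> \<subseteq> Csh (1 - h) (1 - a2) (1 - a1)"
      proof
        fix w assume "w \<in> bone_plus p \<sigma>"
        hence "rflx w \<in> Ush a1 a2 h" using iff st(5) by blast
        thus "w \<in> Csh (1 - h) (1 - a2) (1 - a1)" unfolding Ush_def Csh_def rflx_def by auto
      qed
      show "Csh (1 - h) (1 - a2) (1 - a1) \<subseteq> bone_plus p \<sigma>"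
      proof
        fix w assume "w \<in> Csh (1 - h) (1 - a2) (1 - a1)"
        hence "rflx w \<in> Ush a1 a2 h" unfolding Ush_def Csh_def rflx_def by auto
        thus "w \<in> bone_plus p \<sigma>" using iff st(5) by blast
      qed
    qed
    show "\<forall>w\<in>bone_plus p \<sigma>. fst w = 1 - h \<longrightarrow> fst w \<in> range (\<lambda>k. (saw w ^^ k) (2/3))"
    proof (intro ballI impI)
      fix w assume w: "w \<in> bone_plus p \<sigma>" and f: "fst w = 1 - h"
      have rw: "rflx w \<in> bone_minus p ?s" using iff w by blast
      have "snd (rflx w) = h" using f by (simp add: rflx_def)
      then obtain k where "Yo (rflx w) k = h" using st(6) rw by (metis (no_types, lifting) image_iff)
      hence "(saw w ^^ k) (2/3) = fst w" using orbit_refl23[OF TB[OF w]] f by simp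
      thus "fst w \<in> range (\<lambda>k. (saw w ^^ k) (2/3))" by (metis rangeI)
    qed
    show "\<forall>w\<in>bone_plus p \<sigma>. 1/3 \<in> range (\<lambda>k. (saw w ^^ k) (2/3)) \<longrightarrow> fst w = 1 - h \<and> 1 - a2 < snd w \<and> snd w < 1 - a1"
    proof (intro ballI impI)
      fix w assume w: "w \<in> bone_plus p \<sigma>" and r: "1/3 \<in> range (\<lambda>k. (saw w ^^ k) (2/3))"
      have rw: "rflx w \<in> bone_minus p ?s" using iff w by blast
      obtain k where "(saw w ^^ k) (2/3) = 1/3" using r by auto
      hence "Yo (rflx w) k = 2/3" using orbit_refl23[OF TB[OF w]] by simp
      hence "2/3 \<in> range (Yo (rflx w))" by (metis rangeI)
      hence "snd (rflx w) = h \<and> a1 < fst (rflx w) \<and> fst (rflx w) < a2" using st(7) rw by blast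
      thus "fst w = 1 - h \<and> 1 - a2 < snd w \<and> snd w < 1 - a1" by (auto simp: rflx_def)
    qed
  qed
qed



lemma seg_v: "closed_segment (x, y1) (x, y2) = {w. fst w = x \<and> snd w \<in> closed_segment y1 y2}"
proof
  show "closed_segment (x, y1) (x, y2) \<subseteq> {w. fst w = x \<and> snd w \<in> closed_segment y1 y2}"
  proof
    fix w assume "w \<in> closed_segment (x, y1) (x, y2)"
    then obtain u where u: "0 \<le> u" "u \<le> 1" "w = (1 - u) *\<^sub>R (x, y1) + u *\<^sub>R (x, y2)"
      unfolding closed_segment_def by blast
    have "fst w = x" using u by (simp add: algebra_simps)
    moreover have "snd w = (1 - u) *\<^sub>R y1 + u *\<^sub>R y2" using u by simp
    ultimately show "w \<in> {w. fst w = x \<and> snd w \<in> closed_segment y1 y2}"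
      using u unfolding closed_segment_def by blast
  qed
  show "{w. fst w = x \<and> snd w \<in> closed_segment y1 y2} \<subseteq> closed_segment (x, y1) (x, y2)"
  proof
    fix w assume "w \<in> {w. fst w = x \<and> snd w \<in> closed_segment y1 y2}"
    then obtain u where u: "0 \<le> u" "u \<le> 1" "snd w = (1 - u) *\<^sub>R y1 + u *\<^sub>R y2" "fst w = x"
      unfolding closed_segment_def by blast
    have "w = (1 - u) *\<^sub>R (x, y1) + u *\<^sub>R (x, y2)"
      using u by (simp add: prod_eq_iff algebra_simps)
    thus "w \<in> closed_segment (x, y1) (x, y2)" using u unfolding closed_segment_def by blast
  qed
qed

lemma seg_h: "closed_segment (x1, y) (x2, y) = {w. snd w = y \<and> fst w \<in> closed_segment x1 x2}"
proof
  show "closed_segment (x1, y) (x2, y) \<subseteq> {w. snd w = y \<and> fst w \<in> closed_segment x1 x2}"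
  proof
    fix w assume "w \<in> closed_segment (x1, y) (x2, y)"
    then obtain u where u: "0 \<le> u" "u \<le> 1" "w = (1 - u) *\<^sub>R (x1, y) + u *\<^sub>R (x2, y)"
      unfolding closed_segment_def by blast
    have "snd w = y" using u by (simp add: algebra_simps)
    moreover have "fst w = (1 - u) *\<^sub>R x1 + u *\<^sub>R x2" using u by simp
    ultimately show "w \<in> {w. snd w = y \<and> fst w \<in> closed_segment x1 x2}"
      using u unfolding closed_segment_def by blast
  qed
  show "{w. snd w = y \<and> fst w \<in> closed_segment x1 x2} \<subseteq> closed_segment (x1, y) (x2, y)"
  proof
    fix w assume "w \<in> {w. snd w = y \<and> fst w \<in> closed_segment x1 x2}"
    then obtain u where u: "0 \<le> u" "u \<le> 1" "fst w = (1 - u) *\<^sub>R x1 + u *\<^sub>R x2" "snd w = y"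
      unfolding closed_segment_def by blast
    have "w = (1 - u) *\<^sub>R (x1, y) + u *\<^sub>R (x2, y)"
      using u by (simp add: prod_eq_iff algebra_simps)
    thus "w \<in> closed_segment (x1, y) (x2, y)" using u unfolding closed_segment_def by blast
  qed
qed

lemma edge_w2: "{w \<in> Tbar. snd w = 0} \<in> edges_T"
  unfolding edges_T_def by blast

lemma edge_w1: "{w \<in> Tbar. fst w = 1} \<in> edges_T"
  unfolding edges_T_def by blast

lemma stair_intro:
  assumes "a \<noteq> b" "b \<noteq> c" "c \<noteq> d"
    "(snd a = snd b \<and> fst b = fst c \<and> snd c = snd d) \<or> (fst a = fst b \<and> snd b = snd c \<and> fst c = fst d)"
    "arc (linepath a b +++ linepath b c +++ linepath c d)"
    "S = path_image (linepath a b +++ linepath b c +++ linepath c d)"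
    "\<exists>E\<in>edges_T. a \<in> E \<and> d \<in> E"
  shows "staircase_arc S"
  unfolding staircase_arc_def
  apply (rule exI[of _ a], rule exI[of _ b], rule exI[of _ c], rule exI[of _ d])
  using assms by blast

lemma pt_eq: "fst w = x \<Longrightarrow> snd w = y \<Longrightarrow> w = (x, y)" by auto

lemma arc3:
  fixes a b c d :: "real \<times> real"
  assumes ne: "a \<noteq> b" "b \<noteq> c" "c \<noteq> d"
    and i1: "closed_segment a b \<inter> closed_segment b c \<subseteq> {b}"
    and i2: "closed_segment b c \<inter> closed_segment c d \<subseteq> {c}"
    and i3: "closed_segment a b \<inter> closed_segment c d = {}"
  shows "arc (linepath a b +++ linepath b c +++ linepath c d) \<and>
    path_image (linepath a b +++ linepath b c +++ linepath c d) = closed_segment a b \<union> closed_segment b c \<union> closed_segment c d"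
proof
  have a2: "arc (linepath b c +++ linepath c d)"
    using arc_join[OF arc_linepath[OF ne(2)] arc_linepath[OF ne(3)]] i2 by simp
  have pi2: "path_image (linepath b c +++ linepath c d) = closed_segment b c \<union> closed_segment c d"
    by (simp add: path_image_join)
  show "arc (linepath a b +++ linepath b c +++ linepath c d)"
    using arc_join[OF arc_linepath[OF ne(1)] a2] pi2 i1 i3 by auto
  show "path_image (linepath a b +++ linepath b c +++ linepath c d) = closed_segment a b \<union> closed_segment b c \<union> closed_segment c d"
    using pi2 by (simp add: path_image_join Un_assoc)
qed

lemma stair_U:
  assumes "0 < h" "h < a1" "a1 < a2" "a2 \<le> 1"
  shows "staircase_arc (Ush a1 a2 h)"
proof -
  define A B C D where "A = (a1, 0::real)" "B = (a1, h)" "C = (a2, h)" "D = (a2, 0::real)"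
  have s1: "closed_segment A B = {w. fst w = a1 \<and> 0 \<le> snd w \<and> snd w \<le> h}"
    unfolding A_B_C_D_def seg_v closed_segment_eq_real_ivl using assms by auto
  have s2: "closed_segment B C = {w. snd w = h \<and> a1 \<le> fst w \<and> fst w \<le> a2}"
    unfolding A_B_C_D_def seg_h closed_segment_eq_real_ivl using assms by auto
  have s3: "closed_segment C D = {w. fst w = a2 \<and> 0 \<le> snd w \<and> snd w \<le> h}"
    unfolding A_B_C_D_def seg_v closed_segment_eq_real_ivl using assms by auto
  have ne: "A \<noteq> B" "B \<noteq> C" "C \<noteq> D" unfolding A_B_C_D_def using assms by auto
  have i1: "closed_segment A B \<inter> closed_segment B C \<subseteq> {B}"
  proof
    fix w assume "w \<in> closed_segment A B \<inter> closed_segment B C"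
    hence "w \<in> {w. fst w = a1 \<and> 0 \<le> snd w \<and> snd w \<le> h} \<inter> {w. snd w = h \<and> a1 \<le> fst w \<and> fst w \<le> a2}"
      by (simp only: s1 s2)
    hence "w = (a1, h)" by (auto intro: pt_eq)
    thus "w \<in> {B}" using A_B_C_D_def by simp
  qed
  have i2: "closed_segment B C \<inter> closed_segment C D \<subseteq> {C}"
  proof
    fix w assume "w \<in> closed_segment B C \<inter> closed_segment C D"
    hence "w \<in> {w. snd w = h \<and> a1 \<le> fst w \<and> fst w \<le> a2} \<inter> {w. fst w = a2 \<and> 0 \<le> snd w \<and> snd w \<le> h}"
      by (simp only: s2 s3)
    hence "w = (a2, h)" by (auto intro: pt_eq)
    thus "w \<in> {C}" using A_B_C_D_def by simp
  qed
  have i3: "closed_segment A B \<inter> closed_segment C D = {}" unfolding s1 s3 using assms by auto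
  note ar = arc3[OF ne i1 i2 i3]
  have img: "Ush a1 a2 h = path_image (linepath A B +++ linepath B C +++ linepath C D)"
    unfolding ar[THEN conjunct2] s1 s2 s3 Ush_def by auto
  note E = edge_w2
  have "A \<in> {w \<in> Tbar. snd w = 0}" "D \<in> {w \<in> Tbar. snd w = 0}" unfolding A_B_C_D_def Tbar_iff using assms by auto
  hence "\<exists>E\<in>edges_T. A \<in> E \<and> D \<in> E" using E by (intro bexI) auto
  moreover have "fst A = fst B \<and> snd B = snd C \<and> fst C = fst D" unfolding A_B_C_D_def by simp
  ultimately show ?thesis using stair_intro[OF ne _ ar[THEN conjunct1] img] by blast
qed

lemma stair_C:
  assumes "0 < h1" "h1 < h2" "h2 < b" "b < 1"
  shows "staircase_arc (Csh b h1 h2)"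
proof -
  define A B C D where "A = (1::real, h1)" "B = (b, h1)" "C = (b, h2)" "D = (1::real, h2)"
  have s1: "closed_segment A B = {w. snd w = h1 \<and> b \<le> fst w \<and> fst w \<le> 1}"
    unfolding A_B_C_D_def seg_h closed_segment_eq_real_ivl using assms by auto
  have s2: "closed_segment B C = {w. fst w = b \<and> h1 \<le> snd w \<and> snd w \<le> h2}"
    unfolding A_B_C_D_def seg_v closed_segment_eq_real_ivl using assms by auto
  have s3: "closed_segment C D = {w. snd w = h2 \<and> b \<le> fst w \<and> fst w \<le> 1}"
    unfolding A_B_C_D_def seg_h closed_segment_eq_real_ivl using assms by auto
  have ne: "A \<noteq> B" "B \<noteq> C" "C \<noteq> D" unfolding A_B_C_D_def using assms by auto
  have i1: "closed_segment A B \<inter> closed_segment B C \<subseteq> {B}"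
  proof
    fix w assume "w \<in> closed_segment A B \<inter> closed_segment B C"
    hence "w \<in> {w. snd w = h1 \<and> b \<le> fst w \<and> fst w \<le> 1} \<inter> {w. fst w = b \<and> h1 \<le> snd w \<and> snd w \<le> h2}"
      by (simp only: s1 s2)
    hence "w = (b, h1)" by (auto intro: pt_eq)
    thus "w \<in> {B}" using A_B_C_D_def by simp
  qed
  have i2: "closed_segment B C \<inter> closed_segment C D \<subseteq> {C}"
  proof
    fix w assume "w \<in> closed_segment B C \<inter> closed_segment C D"
    hence "w \<in> {w. fst w = b \<and> h1 \<le> snd w \<and> snd w \<le> h2} \<inter> {w. snd w = h2 \<and> b \<le> fst w \<and> fst w \<le> 1}"
      by (simp only: s2 s3)
    hence "w = (b, h2)" by (auto intro: pt_eq)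
    thus "w \<in> {C}" using A_B_C_D_def by simp
  qed
  have i3: "closed_segment A B \<inter> closed_segment C D = {}" unfolding s1 s3 using assms by auto
  note ar = arc3[OF ne i1 i2 i3]
  have img: "Csh b h1 h2 = path_image (linepath A B +++ linepath B C +++ linepath C D)"
    unfolding ar[THEN conjunct2] s1 s2 s3 Csh_def by auto
  note E = edge_w1
  have "A \<in> {w \<in> Tbar. fst w = 1}" "D \<in> {w \<in> Tbar. fst w = 1}" unfolding A_B_C_D_def Tbar_iff using assms by auto
  hence "\<exists>E\<in>edges_T. A \<in> E \<and> D \<in> E" using E by (intro bexI) auto
  moreover have "snd A = snd B \<and> fst B = fst C \<and> snd C = snd D" unfolding A_B_C_D_def by simp
  ultimately show ?thesis using stair_intro[OF ne _ ar[THEN conjunct1] img] by blast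
qed



lemma orbit_merge:
  assumes per: "(g^^q) z = z" and q: "q \<ge> 1" and e: "(g^^m) x = (g^^n) z"
  shows "z \<in> range (\<lambda>k. (g^^k) x)"
proof -
  have pk: "(g^^(q*k)) z = z" for k
    by (induction k) (simp_all add: funpow_add per)
  have "q * n = (q * n - n) + n" using q by (simp add: le_add_diff_inverse2)
  hence "z = (g^^(q*n - n)) ((g^^n) z)" using pk[of n] by (metis comp_apply funpow_add)
  also have "\<dots> = (g^^(q*n - n)) ((g^^m) x)" using e by simp
  also have "\<dots> = (g^^(q*n - n + m)) x" by (simp add: funpow_add)
  finally show ?thesis by (metis rangeI)
qed

lemma ball_fst: "y \<in> ball x e \<Longrightarrow> \<bar>fst y - fst x\<bar> < e"
  using dist_fst_le[of y x] by (simp add: dist_commute dist_real_def)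
lemma ball_snd: "y \<in> ball x e \<Longrightarrow> \<bar>snd y - snd x\<bar> < e"
  using dist_snd_le[of y x] by (simp add: dist_commute dist_real_def)

lemma Ush_Tbar: "0 < h \<Longrightarrow> h < a1 \<Longrightarrow> a1 < a2 \<Longrightarrow> a2 \<le> 1 \<Longrightarrow> Ush a1 a2 h \<subseteq> Tbar"
  unfolding Ush_def by (auto simp: Tbar_def)

lemma Csh_Tbar: "0 < h1 \<Longrightarrow> h1 < h2 \<Longrightarrow> h2 < b \<Longrightarrow> b < 1 \<Longrightarrow> Csh b h1 h2 \<subseteq> Tbar"
  unfolding Csh_def by (auto simp: Tbar_def)

lemma transv1:
  assumes U: "0 < h" "h < a1" "a1 < a2" "a2 \<le> 1" and C: "0 < h1" "h1 < h2" "h2 < b" "b < 1"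
    and ai: "ai = a1 \<or> ai = a2" and hk: "hk = h1 \<or> hk = h2" and bl: "b < ai" and hl: "hk < h"
  shows "crosses_transversally_at (Ush a1 a2 h) (Csh b h1 h2) (ai, hk)"
proof -
  define e where "e = min (min (h - hk) (a2 - a1)) (min (ai - b) (h2 - h1))"
  have e0: "e > 0" unfolding e_def using U C bl hl by auto
  have ee: "e \<le> h - hk" "e \<le> a2 - a1" "e \<le> ai - b" "e \<le> h2 - h1" unfolding e_def by auto
  have UT: "Ush a1 a2 h \<subseteq> Tbar" using Ush_Tbar U by blast
  have CT: "Csh b h1 h2 \<subseteq> Tbar" using Csh_Tbar C by blast
  have A: "Ush a1 a2 h \<inter> ball (ai, hk) e = {y \<in> ball (ai, hk) e \<inter> Tbar. fst y = fst (ai, hk)}"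
  proof
    show "Ush a1 a2 h \<inter> ball (ai, hk) e \<subseteq> {y \<in> ball (ai, hk) e \<inter> Tbar. fst y = fst (ai, hk)}"
    proof
      fix y assume y: "y \<in> Ush a1 a2 h \<inter> ball (ai, hk) e"
      have d: "\<bar>fst y - ai\<bar> < e" "\<bar>snd y - hk\<bar> < e" using ball_fst[of y "(ai,hk)" e] ball_snd[of y "(ai,hk)" e] y by auto
      have "fst y = ai"
      proof -
        from y have "((fst y = a1 \<or> fst y = a2) \<and> 0 \<le> snd y \<and> snd y \<le> h) \<or> (a1 \<le> fst y \<and> fst y \<le> a2 \<and> snd y = h)"
          unfolding Ush_def by blast
        thus ?thesis using d ee ai by (smt (verit))
      qed
      thus "y \<in> {y \<in> ball (ai, hk) e \<inter> Tbar. fst y = fst (ai, hk)}" using y UT by auto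
    qed
    show "{y \<in> ball (ai, hk) e \<inter> Tbar. fst y = fst (ai, hk)} \<subseteq> Ush a1 a2 h \<inter> ball (ai, hk) e"
    proof
      fix y assume y: "y \<in> {y \<in> ball (ai, hk) e \<inter> Tbar. fst y = fst (ai, hk)}"
      have d: "\<bar>snd y - hk\<bar> < e" using ball_snd[of y "(ai,hk)" e] y by auto
      have "0 \<le> snd y" using y Tbar_iff by auto
      moreover have "snd y \<le> h" using d ee by simp
      moreover have "fst y = ai" using y by simp
      ultimately have "y \<in> Ush a1 a2 h" unfolding Ush_def using ai by auto
      thus "y \<in> Ush a1 a2 h \<inter> ball (ai, hk) e" using y by simp
    qed
  qed
  have B: "Csh b h1 h2 \<inter> ball (ai, hk) e = {y \<in> ball (ai, hk) e \<inter> Tbar. snd y = snd (ai, hk)}"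
  proof
    show "Csh b h1 h2 \<inter> ball (ai, hk) e \<subseteq> {y \<in> ball (ai, hk) e \<inter> Tbar. snd y = snd (ai, hk)}"
    proof
      fix y assume y: "y \<in> Csh b h1 h2 \<inter> ball (ai, hk) e"
      have d: "\<bar>fst y - ai\<bar> < e" "\<bar>snd y - hk\<bar> < e" using ball_fst[of y "(ai,hk)" e] ball_snd[of y "(ai,hk)" e] y by auto
      have "snd y = hk"
      proof -
        from y have "((snd y = h1 \<or> snd y = h2) \<and> b \<le> fst y \<and> fst y \<le> 1) \<or> (fst y = b \<and> h1 \<le> snd y \<and> snd y \<le> h2)"
          unfolding Csh_def by blast
        thus ?thesis using d ee hk by (smt (verit))
      qed
      thus "y \<in> {y \<in> ball (ai, hk) e \<inter> Tbar. snd y = snd (ai, hk)}" using y CT by auto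
    qed
    show "{y \<in> ball (ai, hk) e \<inter> Tbar. snd y = snd (ai, hk)} \<subseteq> Csh b h1 h2 \<inter> ball (ai, hk) e"
    proof
      fix y assume y: "y \<in> {y \<in> ball (ai, hk) e \<inter> Tbar. snd y = snd (ai, hk)}"
      have d: "\<bar>fst y - ai\<bar> < e" using ball_fst[of y "(ai,hk)" e] y by auto
      have "fst y \<le> 1" using y Tbar_iff by auto
      moreover have "b \<le> fst y" using d ee by simp
      moreover have "snd y = hk" using y by simp
      ultimately have "y \<in> Csh b h1 h2" unfolding Csh_def using hk by auto
      thus "y \<in> Csh b h1 h2 \<inter> ball (ai, hk) e" using y by simp
    qed
  qed
  show ?thesis unfolding crosses_transversally_at_def using e0 A B by blast
qed

lemma transv2:
  assumes U: "0 < h" "h < a1" "a1 < a2" "a2 \<le> 1" and C: "0 < h1" "h1 < h2" "h2 < b" "b < 1"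
    and bb: "a1 < b" "b < a2" and hh: "h1 < h" "h < h2"
  shows "crosses_transversally_at (Ush a1 a2 h) (Csh b h1 h2) (b, h)"
proof -
  define e where "e = min (min (b - a1) (a2 - b)) (min (h - h1) (h2 - h))"
  have e0: "e > 0" unfolding e_def using bb hh by auto
  have ee: "e \<le> b - a1" "e \<le> a2 - b" "e \<le> h - h1" "e \<le> h2 - h" unfolding e_def by auto
  have UT: "Ush a1 a2 h \<subseteq> Tbar" using Ush_Tbar U by blast
  have CT: "Csh b h1 h2 \<subseteq> Tbar" using Csh_Tbar C by blast
  have A: "Ush a1 a2 h \<inter> ball (b, h) e = {y \<in> ball (b, h) e \<inter> Tbar. snd y = snd (b, h)}"
  proof
    show "Ush a1 a2 h \<inter> ball (b, h) e \<subseteq> {y \<in> ball (b, h) e \<inter> Tbar. snd y = snd (b, h)}"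
    proof
      fix y assume y: "y \<in> Ush a1 a2 h \<inter> ball (b, h) e"
      have d: "\<bar>fst y - b\<bar> < e" using ball_fst[of y "(b,h)" e] y by auto
      have "snd y = h"
      proof -
        from y have "((fst y = a1 \<or> fst y = a2) \<and> 0 \<le> snd y \<and> snd y \<le> h) \<or> (a1 \<le> fst y \<and> fst y \<le> a2 \<and> snd y = h)"
          unfolding Ush_def by blast
        thus ?thesis using d ee by (smt (verit))
      qed
      thus "y \<in> {y \<in> ball (b, h) e \<inter> Tbar. snd y = snd (b, h)}" using y UT by auto
    qed
    show "{y \<in> ball (b, h) e \<inter> Tbar. snd y = snd (b, h)} \<subseteq> Ush a1 a2 h \<inter> ball (b, h) e"
    proof
      fix y assume y: "y \<in> {y \<in> ball (b, h) e \<inter> Tbar. snd y = snd (b, h)}"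
      have d: "\<bar>fst y - b\<bar> < e" using ball_fst[of y "(b,h)" e] y by auto
      have "a1 \<le> fst y" "fst y \<le> a2" using d ee by auto
      moreover have "snd y = h" using y by simp
      ultimately have "y \<in> Ush a1 a2 h" unfolding Ush_def by auto
      thus "y \<in> Ush a1 a2 h \<inter> ball (b, h) e" using y by simp
    qed
  qed
  have B: "Csh b h1 h2 \<inter> ball (b, h) e = {y \<in> ball (b, h) e \<inter> Tbar. fst y = fst (b, h)}"
  proof
    show "Csh b h1 h2 \<inter> ball (b, h) e \<subseteq> {y \<in> ball (b, h) e \<inter> Tbar. fst y = fst (b, h)}"
    proof
      fix y assume y: "y \<in> Csh b h1 h2 \<inter> ball (b, h) e"
      have d: "\<bar>snd y - h\<bar> < e" using ball_snd[of y "(b,h)" e] y by auto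
      have "fst y = b"
      proof -
        from y have "((snd y = h1 \<or> snd y = h2) \<and> b \<le> fst y \<and> fst y \<le> 1) \<or> (fst y = b \<and> h1 \<le> snd y \<and> snd y \<le> h2)"
          unfolding Csh_def by blast
        thus ?thesis using d ee by (smt (verit))
      qed
      thus "y \<in> {y \<in> ball (b, h) e \<inter> Tbar. fst y = fst (b, h)}" using y CT by auto
    qed
    show "{y \<in> ball (b, h) e \<inter> Tbar. fst y = fst (b, h)} \<subseteq> Csh b h1 h2 \<inter> ball (b, h) e"
    proof
      fix y assume y: "y \<in> {y \<in> ball (b, h) e \<inter> Tbar. fst y = fst (b, h)}"
      have d: "\<bar>snd y - h\<bar> < e" using ball_snd[of y "(b,h)" e] y by auto
      have "h1 \<le> snd y" "snd y \<le> h2" using d ee by auto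
      moreover have "fst y = b" using y by simp
      ultimately have "y \<in> Csh b h1 h2" unfolding Csh_def by auto
      thus "y \<in> Csh b h1 h2 \<inter> ball (b, h) e" using y by simp
    qed
  qed
  show ?thesis unfolding crosses_transversally_at_def using e0 A B by blast
qed



lemma Xlem:
  assumes Am: "w \<in> bone_minus p \<sigma>" and Bp: "w \<in> bone_plus q \<tau>"
  and A: "bone_minus p \<sigma> = Ush a1 a2 h" and C: "bone_plus q \<tau> = Csh b h1 h2"
  and FA1: "\<forall>w\<in>bone_minus p \<sigma>. snd w = h \<longrightarrow> snd w \<in> range (Yo w)"
  and FA2: "\<forall>w\<in>bone_minus p \<sigma>. 2/3 \<in> range (Yo w) \<longrightarrow> snd w = h \<and> a1 < fst w \<and> fst w < a2"
  and FC1: "\<forall>w\<in>bone_plus q \<tau>. fst w = b \<longrightarrow> fst w \<in> range (\<lambda>k. (saw w ^^ k) (2/3))"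
  and FC2: "\<forall>w\<in>bone_plus q \<tau>. 1/3 \<in> range (\<lambda>k. (saw w ^^ k) (2/3)) \<longrightarrow> fst w = b \<and> h1 < snd w \<and> snd w < h2"
  shows "(w = (b,h) \<and> a1 < b \<and> b < a2 \<and> h1 < h \<and> h < h2) \<or>
         ((fst w = a1 \<or> fst w = a2) \<and> (snd w = h1 \<or> snd w = h2) \<and> b < fst w \<and> snd w < h)"
proof -
  have T: "w \<in> Tbar" using Am by (simp add: bone_minus_def)
  have pm: "periodic_order_type (saw w) (1/3) p \<sigma>" using Am by (simp add: bone_minus_def)
  have pp: "periodic_order_type (saw w) (2/3) q \<tau>" using Bp by (simp add: bone_plus_def)
  note b1 = pot_basic[OF pm] and b2 = pot_basic[OF pp]
  have YoR: "range (Yo w) = range (\<lambda>k. (saw w ^^ k) (1/3))" unfolding Yo_def by simp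
  show ?thesis
  proof (cases "2/3 \<in> range (Yo w)")
    case True
    hence h: "snd w = h" "a1 < fst w" "fst w < a2" using FA2 Am by auto
    obtain m where m: "(saw w ^^ m) (1/3) = 2/3" using True YoR by (metis (no_types, lifting) imageE)
    have "1/3 \<in> range (\<lambda>k. (saw w ^^ k) (2/3))"
      using orbit_merge[where g="saw w" and q=p and z="1/3" and m=0 and x="2/3" and n=m] b1 m by simp
    hence c: "fst w = b" "h1 < snd w" "snd w < h2" using FC2 Bp by auto
    have "w = (b, h)" using h c by (simp add: prod_eq_iff)
    thus ?thesis using h c by auto
  next
    case False
    have sh: "snd w \<noteq> h"
    proof
      assume "snd w = h"
      hence "snd w \<in> range (Yo w)" using FA1 Am by blast
      then obtain m where "(saw w ^^ m) (1/3) = snd w" unfolding Yo_def by auto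
      hence "(saw w ^^ m) (1/3) = (saw w ^^ 1) (2/3)" using saw_23[OF T] by simp
      hence "2/3 \<in> range (\<lambda>k. (saw w ^^ k) (1/3))" using orbit_merge[where g="saw w" and q=q and z="2/3" and m=m and x="1/3" and n=1] b2 by simp
      thus False using False YoR by simp
    qed
    have fb: "fst w \<noteq> b"
    proof
      assume "fst w = b"
      hence "fst w \<in> range (\<lambda>k. (saw w ^^ k) (2/3))" using FC1 Bp by blast
      then obtain m where "(saw w ^^ m) (2/3) = fst w" by auto
      hence "(saw w ^^ 1) (1/3) = (saw w ^^ m) (2/3)" using saw_13[OF T] by simp
      hence "2/3 \<in> range (\<lambda>k. (saw w ^^ k) (1/3))" using orbit_merge[where g="saw w" and q=q and z="2/3" and m=1 and x="1/3" and n=m] b2 by simp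
      thus False using False YoR by simp
    qed
    have "w \<in> Ush a1 a2 h" using Am A by simp
    hence u: "(fst w = a1 \<or> fst w = a2) \<and> snd w < h" using sh unfolding Ush_def by auto
    have "w \<in> Csh b h1 h2" using Bp C by simp
    hence c: "(snd w = h1 \<or> snd w = h2) \<and> b < fst w" using fb unfolding Csh_def by auto
    show ?thesis using u c by auto
  qed
qed

lemma count:
  fixes a1 a2 b h h1 h2 :: real
  assumes a12: "a1 < a2" and h12: "h1 < h2"
    and C1: "\<forall>x\<in>{a1,a2}. \<forall>y\<in>{h1,h2}. b \<le> x \<and> y \<le> h \<longrightarrow> b < x \<and> y < h"
    and C2: "a1 \<le> b \<and> b \<le> a2 \<and> h1 \<le> h \<and> h \<le> h2 \<longrightarrow> a1 < b \<and> b < a2 \<and> h1 < h \<and> h < h2"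
  shows "card ({x\<in>{a1,a2}. b < x} \<times> {y\<in>{h1,h2}. y < h}) + (if a1 < b \<and> b < a2 \<and> h1 < h \<and> h < h2 then 1 else 0) \<in> {0::nat,2,4}"
proof -
  have cX: "card {x\<in>{a1,a2}. b < x} = (if b < a1 then 2 else if b < a2 then 1 else 0)"
  proof (cases "b < a1")
    case True
    hence "{x\<in>{a1,a2}. b < x} = {a1,a2}" using a12 by auto
    thus ?thesis using True a12 by simp
  next
    case False
    show ?thesis
    proof (cases "b < a2")
      case True
      hence "{x\<in>{a1,a2}. b < x} = {a2}" using False by auto
      thus ?thesis using True False by simp
    next
      case False2: False
      hence "{x\<in>{a1,a2}. b < x} = {}" using a12 by auto
      thus ?thesis using False False2 by simp
    qed
  qed
  have cY: "card {y\<in>{h1,h2}. y < h} = (if h2 < h then 2 else if h1 < h then 1 else 0)"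
  proof (cases "h2 < h")
    case True
    hence "{y\<in>{h1,h2}. y < h} = {h1,h2}" using h12 by auto
    thus ?thesis using True h12 by simp
  next
    case False
    show ?thesis
    proof (cases "h1 < h")
      case True
      hence "{y\<in>{h1,h2}. y < h} = {h1}" using False by auto
      thus ?thesis using True False by simp
    next
      case False2: False
      hence "{y\<in>{h1,h2}. y < h} = {}" using h12 by auto
      thus ?thesis using False False2 by simp
    qed
  qed
  have cP: "card ({x\<in>{a1,a2}. b < x} \<times> {y\<in>{h1,h2}. y < h}) = card {x\<in>{a1,a2}. b < x} * card {y\<in>{h1,h2}. y < h}"
    by (rule card_cartesian_product)
  have c11: "b \<le> a1 \<and> h1 \<le> h \<longrightarrow> b < a1 \<and> h1 < h" and c12: "b \<le> a1 \<and> h2 \<le> h \<longrightarrow> b < a1 \<and> h2 < h"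
    and c21: "b \<le> a2 \<and> h1 \<le> h \<longrightarrow> b < a2 \<and> h1 < h" and c22: "b \<le> a2 \<and> h2 \<le> h \<longrightarrow> b < a2 \<and> h2 < h"
    using C1 by auto
  show ?thesis unfolding cP cX cY
  proof (cases "b < a1")
    case True thus "(if b < a1 then 2 else if b < a2 then 1 else 0) * (if h2 < h then 2 else if h1 < h then 1 else 0) +
      (if a1 < b \<and> b < a2 \<and> h1 < h \<and> h < h2 then 1 else 0) \<in> {0::nat, 2, 4}" by auto
  next
    case nb1: False
    show "(if b < a1 then 2 else if b < a2 then 1 else 0) * (if h2 < h then 2 else if h1 < h then 1 else 0) +
      (if a1 < b \<and> b < a2 \<and> h1 < h \<and> h < h2 then 1 else 0) \<in> {0::nat, 2, 4}"
    proof (cases "b < a2")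
      case False thus ?thesis using nb1 by auto
    next
      case True
      show ?thesis
      proof (cases "b = a1")
        case True
        hence "h < h1" "h < h2" using c11 c12 by auto
        thus ?thesis using nb1 \<open>b < a2\<close> True by auto
      next
        case False
        hence ab: "a1 < b" using nb1 by simp
        have "h \<noteq> h1" using c21 True by auto
        moreover have "h \<noteq> h2" using c22 True by auto
        ultimately consider "h < h1" | "h1 < h \<and> h < h2" | "h2 < h" using h12 by linarith
        thus ?thesis
        proof cases
          case 1 thus ?thesis using nb1 True ab h12 by auto
        next
          case 2 thus ?thesis using nb1 True ab h12 by auto
        next
          case 3 thus ?thesis using nb1 True ab h12 by auto
        qed
      qed
    qed
  qed
qed



lemma sig_cyc: "cyclic_perm p \<sigma> \<Longrightarrow> \<forall>i\<in>{1..p}. \<sigma> i \<in> {1..p}"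
proof
  fix i assume c: "cyclic_perm p \<sigma>" and i: "i \<in> {1..p}"
  have "\<sigma> permutes {1..p}" using c unfolding cyclic_perm_def by simp
  thus "\<sigma> i \<in> {1..p}" using permutes_in_image i by metis
qed

lemma inter_main:
  assumes p: "p \<ge> 2" and sp: "\<forall>i\<in>{1..p}. \<sigma> i \<in> {1..p}" and q: "q \<ge> 2" and sq: "\<forall>i\<in>{1..q}. \<tau> i \<in> {1..q}"
    and ne1: "bone_minus p \<sigma> \<noteq> {}" and ne2: "bone_plus q \<tau> \<noteq> {}"
  shows "\<exists>(a1::real) (a2::real) (h::real) (b::real) (h1::real) (h2::real). finite (bone_minus p \<sigma> \<inter> bone_plus q \<tau>) \<and>
     card (bone_minus p \<sigma> \<inter> bone_plus q \<tau>) = card ({x\<in>{a1,a2}. b < x} \<times> {y\<in>{h1,h2}. y < h}) + (if a1 < b \<and> b < a2 \<and> h1 < h \<and> h < h2 then 1 else 0) \<and>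
     card (bone_minus p \<sigma> \<inter> bone_plus q \<tau>) \<in> {0, 2, 4} \<and>
     (\<forall>x \<in> bone_minus p \<sigma> \<inter> bone_plus q \<tau>. crosses_transversally_at (bone_minus p \<sigma>) (bone_plus q \<tau>) x) \<and>
     (\<forall>w\<in>bone_minus p \<sigma> \<inter> bone_plus q \<tau>. 2/3 \<in> range (Yo w) \<longrightarrow> a1 < b \<and> b < a2 \<and> h1 < h \<and> h < h2) \<and>
     a1 < a2 \<and> h1 < h2"
proof -
  from bone_minus_struct[OF p sp ne1] obtain a1 a2 h where
    A: "0 < h" "h < a1" "a1 < a2" "a2 < 1" "bone_minus p \<sigma> = Ush a1 a2 h"
      "\<forall>w\<in>bone_minus p \<sigma>. snd w = h \<longrightarrow> snd w \<in> range (Yo w)"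
      "\<forall>w\<in>bone_minus p \<sigma>. 2/3 \<in> range (Yo w) \<longrightarrow> snd w = h \<and> a1 < fst w \<and> fst w < a2"
    by (elim exE conjE) blast
  from bone_plus_struct[OF q sq ne2] obtain b h1 h2 where
    C: "0 < h1" "h1 < h2" "h2 < b" "b < 1" "bone_plus q \<tau> = Csh b h1 h2"
      "\<forall>w\<in>bone_plus q \<tau>. fst w = b \<longrightarrow> fst w \<in> range (\<lambda>k. (saw w ^^ k) (2/3))"
      "\<forall>w\<in>bone_plus q \<tau>. 1/3 \<in> range (\<lambda>k. (saw w ^^ k) (2/3)) \<longrightarrow> fst w = b \<and> h1 < snd w \<and> snd w < h2"
    by (elim exE conjE) blast
  let ?I = "bone_minus p \<sigma> \<inter> bone_plus q \<tau>"
  let ?c = "a1 < b \<and> b < a2 \<and> h1 < h \<and> h < h2"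
  define S1 where "S1 = {x\<in>{a1,a2}. b < x} \<times> {y\<in>{h1,h2}. y < h}"
  define S2 where "S2 = (if ?c then {(b,h)} else {})"
  have X: "(w = (b,h) \<and> ?c) \<or> ((fst w = a1 \<or> fst w = a2) \<and> (snd w = h1 \<or> snd w = h2) \<and> b < fst w \<and> snd w < h)"
    if w: "w \<in> ?I" for w
    using w by (intro Xlem[OF _ _ A(5) C(5) A(6) A(7) C(6) C(7)]) auto
  have Ieq: "?I = S1 \<union> S2"
  proof
    show "?I \<subseteq> S1 \<union> S2"
    proof
      fix w assume w: "w \<in> ?I"
      from X[OF w] show "w \<in> S1 \<union> S2"
      proof
        assume "w = (b,h) \<and> ?c" thus ?thesis unfolding S2_def by simp
      next
        assume H: "(fst w = a1 \<or> fst w = a2) \<and> (snd w = h1 \<or> snd w = h2) \<and> b < fst w \<and> snd w < h"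
        have "fst w \<in> {x\<in>{a1,a2}. b < x}" "snd w \<in> {y\<in>{h1,h2}. y < h}" using H by auto
        hence "w \<in> S1" unfolding S1_def by (simp add: mem_Times_iff)
        thus ?thesis by simp
      qed
    qed
    show "S1 \<union> S2 \<subseteq> ?I"
    proof
      fix w assume "w \<in> S1 \<union> S2"
      thus "w \<in> ?I"
      proof
        assume "w \<in> S1"
        hence H: "fst w \<in> {a1,a2}" "b < fst w" "snd w \<in> {h1,h2}" "snd w < h" unfolding S1_def by auto
        have "w \<in> Ush a1 a2 h" unfolding Ush_def using H A(1-4) C(1-4) by auto
        moreover have "w \<in> Csh b h1 h2" unfolding Csh_def using H A(1-4) C(1-4) by auto
        ultimately show ?thesis using A(5) C(5) by simp
      next
        assume "w \<in> S2"
        hence H: "w = (b,h)" "?c" unfolding S2_def by (auto split: if_splits)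
        have "w \<in> Ush a1 a2 h" unfolding Ush_def using H by auto
        moreover have "w \<in> Csh b h1 h2" unfolding Csh_def using H by auto
        ultimately show ?thesis using A(5) C(5) by simp
      qed
    qed
  qed
  have fin: "finite ?I" unfolding Ieq S1_def S2_def by simp
  have disj: "S1 \<inter> S2 = {}" unfolding S1_def S2_def by auto
  have cS2: "card S2 = (if ?c then 1 else 0)" unfolding S2_def by simp
  have cI: "card ?I = card S1 + (if ?c then 1 else 0)"
    unfolding Ieq using card_Un_disjoint[of S1 S2] disj cS2 unfolding S1_def S2_def by simp
  have inI: "w \<in> ?I" if "w \<in> Ush a1 a2 h" "w \<in> Csh b h1 h2" for w using that A(5) C(5) by simp
  have C1: "\<forall>x\<in>{a1,a2}. \<forall>y\<in>{h1,h2}. b \<le> x \<and> y \<le> h \<longrightarrow> b < x \<and> y < h"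
  proof (intro ballI impI)
    fix x y assume x: "x \<in> {a1,a2}" and y: "y \<in> {h1,h2}" and xy: "b \<le> x \<and> y \<le> h"
    have "(x,y) \<in> Ush a1 a2 h" unfolding Ush_def using x y xy A(1-4) C(1-4) by auto
    moreover have "(x,y) \<in> Csh b h1 h2" unfolding Csh_def using x y xy A(1-4) C(1-4) by auto
    ultimately have "(x,y) \<in> ?I" using inI by blast
    from X[OF this] show "b < x \<and> y < h" using x by auto
  qed
  have C2: "a1 \<le> b \<and> b \<le> a2 \<and> h1 \<le> h \<and> h \<le> h2 \<longrightarrow> ?c"
  proof
    assume H: "a1 \<le> b \<and> b \<le> a2 \<and> h1 \<le> h \<and> h \<le> h2"
    have "(b,h) \<in> Ush a1 a2 h" unfolding Ush_def using H by auto
    moreover have "(b,h) \<in> Csh b h1 h2" unfolding Csh_def using H by auto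
    ultimately have "(b,h) \<in> ?I" using inI by blast
    from X[OF this] show ?c by auto
  qed
  have cnt: "card ?I \<in> {0,2,4}" using count[OF A(3) C(2) C1 C2] cI unfolding S1_def by simp
  have tr: "\<forall>x\<in>?I. crosses_transversally_at (bone_minus p \<sigma>) (bone_plus q \<tau>) x"
  proof
    fix x assume x: "x \<in> ?I"
    from X[OF x] show "crosses_transversally_at (bone_minus p \<sigma>) (bone_plus q \<tau>) x"
    proof
      assume "x = (b,h) \<and> ?c"
      thus ?thesis using transv2[of h a1 a2 h1 h2 b] A(1-5) C(1-5) by auto
    next
      assume H: "(fst x = a1 \<or> fst x = a2) \<and> (snd x = h1 \<or> snd x = h2) \<and> b < fst x \<and> snd x < h"
      have "crosses_transversally_at (Ush a1 a2 h) (Csh b h1 h2) (fst x, snd x)"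
        using transv1[of h a1 a2 h1 h2 b "fst x" "snd x"] A(1-4) C(1-4) H by auto
      thus ?thesis using A(5) C(5) by simp
    qed
  qed
  have c23: "\<forall>w\<in>?I. 2/3 \<in> range (Yo w) \<longrightarrow> ?c"
  proof (intro ballI impI)
    fix w assume w: "w \<in> ?I" and r: "2/3 \<in> range (Yo w)"
    have "snd w = h" using A(7) w r by blast
    thus ?c using X[OF w] by auto
  qed
  show ?thesis
    apply (rule_tac x=a1 in exI, rule_tac x=a2 in exI, rule_tac x=h in exI, rule_tac x=b in exI, rule_tac x=h1 in exI, rule_tac x=h2 in exI)
    using fin cI cnt tr c23 A(3) C(2) unfolding S1_def by blast
qed

lemma part1: "\<forall>p \<sigma>. p \<ge> 2 \<longrightarrow> cyclic_perm p \<sigma> \<longrightarrow>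
        (bone_minus p \<sigma> \<noteq> {} \<longrightarrow> staircase_arc (bone_minus p \<sigma>)) \<and>
        (bone_plus p \<sigma> \<noteq> {} \<longrightarrow> staircase_arc (bone_plus p \<sigma>))"
proof (intro allI impI conjI)
  fix p \<sigma> assume p: "p \<ge> 2" and c: "cyclic_perm p \<sigma>"
  note s = sig_cyc[OF c]
  { assume ne: "bone_minus p \<sigma> \<noteq> {}"
    from bone_minus_struct[OF p s ne] obtain a1 a2 h where
      A: "0 < h" "h < a1" "a1 < a2" "a2 < 1" "bone_minus p \<sigma> = Ush a1 a2 h" by blast
    show "staircase_arc (bone_minus p \<sigma>)" using stair_U[of h a1 a2] A by simp }
  { assume ne: "bone_plus p \<sigma> \<noteq> {}"
    from bone_plus_struct[OF p s ne] obtain b h1 h2 where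
      C: "0 < h1" "h1 < h2" "h2 < b" "b < 1" "bone_plus p \<sigma> = Csh b h1 h2" by blast
    show "staircase_arc (bone_plus p \<sigma>)" using stair_C[of h1 h2 b] C by simp }
qed

lemma part2: "\<forall>p \<sigma> q \<tau>. p \<ge> 2 \<longrightarrow> cyclic_perm p \<sigma> \<longrightarrow> q \<ge> 2 \<longrightarrow> cyclic_perm q \<tau> \<longrightarrow>
        bone_minus p \<sigma> \<noteq> {} \<longrightarrow> bone_plus q \<tau> \<noteq> {} \<longrightarrow>
        finite (bone_minus p \<sigma> \<inter> bone_plus q \<tau>) \<and>
        card (bone_minus p \<sigma> \<inter> bone_plus q \<tau>) \<in> {0, 2, 4} \<and>
        (\<forall>x \<in> bone_minus p \<sigma> \<inter> bone_plus q \<tau>.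
           crosses_transversally_at (bone_minus p \<sigma>) (bone_plus q \<tau>) x)"
proof (intro allI impI)
  fix p \<sigma> q \<tau> assume p: "p \<ge> 2" and c: "cyclic_perm p \<sigma>" and q: "q \<ge> 2" and d: "cyclic_perm q \<tau>"
    and ne1: "bone_minus p \<sigma> \<noteq> {}" and ne2: "bone_plus q \<tau> \<noteq> {}"
  from inter_main[OF p sig_cyc[OF c] q sig_cyc[OF d] ne1 ne2]
  show "finite (bone_minus p \<sigma> \<inter> bone_plus q \<tau>) \<and>
        card (bone_minus p \<sigma> \<inter> bone_plus q \<tau>) \<in> {0, 2, 4} \<and>
        (\<forall>x \<in> bone_minus p \<sigma> \<inter> bone_plus q \<tau>.
           crosses_transversally_at (bone_minus p \<sigma>) (bone_plus q \<tau>) x)" by blast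
qed

lemma part3: "\<forall>p \<sigma>. p \<ge> 2 \<longrightarrow> cyclic_perm p \<sigma> \<longrightarrow>
        bone_minus p \<sigma> \<noteq> {} \<longrightarrow> bone_plus p \<sigma> \<noteq> {} \<longrightarrow>
        card (bone_minus p \<sigma> \<inter> bone_plus p \<sigma>) = 2"
proof (intro allI impI)
  fix p \<sigma> assume p: "p \<ge> 2" and c: "cyclic_perm p \<sigma>"
    and ne1: "bone_minus p \<sigma> \<noteq> {}" and ne2: "bone_plus p \<sigma> \<noteq> {}"
  note s = sig_cyc[OF c]
  from bone_minus_struct[OF p s ne1] obtain w where w: "w \<in> bone_minus p \<sigma>" "2/3 \<in> range (Yo w)" by blast
  have T: "w \<in> Tbar" using w by (simp add: bone_minus_def)
  obtain m where m: "(saw w ^^ m) (1/3) = 2/3" using w(2) unfolding Yo_def by auto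
  have "periodic_order_type (saw w) ((saw w ^^ m) (1/3)) p \<sigma>"
    using pot_rotate w(1) by (simp add: bone_minus_def)
  hence "w \<in> bone_plus p \<sigma>" using m T by (simp add: bone_plus_def)
  hence wI: "w \<in> bone_minus p \<sigma> \<inter> bone_plus p \<sigma>" using w by simp
  from inter_main[OF p s p s ne1 ne2] obtain a1 a2 h b h1 h2 :: real where
    M: "card (bone_minus p \<sigma> \<inter> bone_plus p \<sigma>) = card ({x\<in>{a1,a2}. b < x} \<times> {y\<in>{h1,h2}. y < h}) + (if a1 < b \<and> b < a2 \<and> h1 < h \<and> h < h2 then 1 else 0)"
      "\<forall>w\<in>bone_minus p \<sigma> \<inter> bone_plus p \<sigma>. 2/3 \<in> range (Yo w) \<longrightarrow> a1 < b \<and> b < a2 \<and> h1 < h \<and> h < h2"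
      "a1 < a2" "h1 < h2" by blast
  have cc: "a1 < b \<and> b < a2 \<and> h1 < h \<and> h < h2" using M(2) wI w(2) by blast
  have "\<not> b < a1" using cc by auto
  hence "{x\<in>{a1,a2}. b < x} = {a2}" using cc by auto
  moreover have "{y\<in>{h1,h2}. y < h} = {h1}" using cc by auto
  ultimately show "card (bone_minus p \<sigma> \<inter> bone_plus p \<sigma>) = 2" using M(1) cc by simp
qed

theorem lemma3:
  shows
    "(\<forall>p \<sigma>. p \<ge> 2 \<longrightarrow> cyclic_perm p \<sigma> \<longrightarrow>
        (bone_minus p \<sigma> \<noteq> {} \<longrightarrow> staircase_arc (bone_minus p \<sigma>)) \<and>
        (bone_plus p \<sigma> \<noteq> {} \<longrightarrow> staircase_arc (bone_plus p \<sigma>)))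
   \<and> (\<forall>p \<sigma> q \<tau>. p \<ge> 2 \<longrightarrow> cyclic_perm p \<sigma> \<longrightarrow> q \<ge> 2 \<longrightarrow> cyclic_perm q \<tau> \<longrightarrow>
        bone_minus p \<sigma> \<noteq> {} \<longrightarrow> bone_plus q \<tau> \<noteq> {} \<longrightarrow>
        finite (bone_minus p \<sigma> \<inter> bone_plus q \<tau>) \<and>
        card (bone_minus p \<sigma> \<inter> bone_plus q \<tau>) \<in> {0, 2, 4} \<and>
        (\<forall>x \<in> bone_minus p \<sigma> \<inter> bone_plus q \<tau>.
           crosses_transversally_at (bone_minus p \<sigma>) (bone_plus q \<tau>) x))
   \<and> (\<forall>p \<sigma>. p \<ge> 2 \<longrightarrow> cyclic_perm p \<sigma> \<longrightarrow>
        bone_minus p \<sigma> \<noteq> {} \<longrightarrow> bone_plus p \<sigma> \<noteq> {} \<longrightarrow>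
        card (bone_minus p \<sigma> \<inter> bone_plus p \<sigma>) = 2)"
  using part1 part2 part3 by blast

end
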